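(* Assume the hypotheses in the context, and assume $\lambda>\overline L$. Then there is a constant $C=C(\lambda,M_f,M_g,L_f,L_g,L_u)>0$ such that for all $0<h\le 1/(2\lambda)$, all $u\in\mathbb{U}_{\rm ad}$ and all $y_0\in\mathbb{R}^n$, with $\boldsymbol u=\{u(t_0),u(t_1),\dots\}$, $t_i=ih$, $$\left|\hat J(y_0,u)-\hat J_{h,k}(y_0,\boldsymbol u)\right|\le C(h+k).$$
   Context: Let $f:\mathbb{R}^n\times\mathbb{R}^m\to\mathbb{R}^n$ and $g:\mathbb{R}^n\times\mathbb{R}^m\to\mathbb{R}$, $\lambda>0$, and $U_{\rm ad}\subset\mathbb{R}^m$ compact and convex. Hypotheses: $\|f(y,u)-f(\tilde y,u)\|_2\le L_f\|y-\tilde y\|_2$ and $\|f(y,u)-f(y,\tilde u)\|_2\le L_f\|u-\tilde u\|_2$ for all $y,\tilde y\in\mathbb{R}^n$, $u,\tilde u\in U_{\rm ad}$; $|g(y,u)-g(\tilde y,u)|\le L_g\|y-\tilde y\|_2$ and $|g(y,u)-g(y,\tilde u)|\le L_g\|u-\tilde u\|_2$ likewise; $f,g$ continuous; $\overline\Omega\subset\mathbb{R}^n$ is a bounded polyhedron with $\max_{1\le i\le n}|f_i(y,u)|\le M_f$ and $|g(y,u)|\le M_g$ for all $(y,u)\in\overline\Omega\times U_{\rm ad}$ (and $y+hf(y,u)\in\overline\Omega$ for $y\in\overline\Omega$, $u\in U_{\rm ad}$, $h$ small). Admissible controls: $\mathbb{U}_{\rm ad}=\{u\in L^2(0,\infty;\mathbb{R}^m):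 u(t)\in U_{\rm ad}\text{ a.e.}\}$, and controls are assumed Lipschitz: $\|u(t)-u(s)\|_2\le L_u|t-s|$. For $u\in\mathbb{U}_{\rm ad}$, $y(t)$ solves $\dot y=f(y,u)$, $y(0)=y_0$, and $\hat J(y_0,u)=\int_0^\infty g(y(t),u(t))e^{-\lambda t}\,dt$. Fully discrete setting: a regular triangulation $\{S_j\}$ of $\overline\Omega$ by simplices with vertices $y_1,\dots,y_{n_s}$ and $k=\max_j\operatorname{diam}S_j$; $I_k$ denotes piecewise linear interpolation in the $y$ variable at the vertices. $C_I$ denotes a constant such that the interpolant's gradient satisfies $\|\nabla I_k f_j(\cdot,u)\|_2\le C_I\sqrt n L_f$ on each simplex, and $\overline L=C_I\,n\,L_f$. For a sequence $\boldsymbol u=\{u_0,u_1,\dots\}\subset U_{\rm ad}$ and $\delta_h=1-\lambda h$: $\hat y_0=y_0$, $\hat y_{n+1}=\hat y_n+hI_kf(\hat y_n,u_n)$, and $\hat J_{h,k}(y_0,\boldsymbol u)=h\sum_{n=0}^\infty\delta_h^n I_kg(\hat y_n,u_n)$. *)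

theory Defs
  imports "HOL-Analysis.Analysis"
begin

definition regular_triangulation :: "('a::euclidean_space) set set \<Rightarrow> 'a set \<Rightarrow> bool" where
  "regular_triangulation \<T> Om \<longleftrightarrow>
     triangulation \<T> \<and> (\<forall>S\<in>\<T>. int DIM('a) simplex S) \<and> \<Union>\<T> = Om"

definition verts :: "('a::real_vector) set \<Rightarrow> 'a set" where
  "verts S = {v. v extreme_point_of S}"

definition mesh :: "('a::euclidean_space) set set \<Rightarrow> real" where
  "mesh \<T> = Max (diameter ` \<T>)"

definition interp :: "('a::euclidean_space) set set \<Rightarrow> ('a \<Rightarrow> 'b::real_vector) \<Rightarrow> 'a \<Rightarrow> 'b" where
  "interp \<T> F y =
     (if y \<in> \<Union>\<T> then
        (SOME z. \<exists>S\<in>\<T>. y \<in> S \<and> (\<exists>c. (\<forall>v\<in>verts S. 0 \<le> c v) \<and> sum c (verts S) = 1 \<and>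
                   (\<Sum>v\<in>verts S. c v *\<^sub>R v) = y \<and> z = (\<Sum>v\<in>verts S. c v *\<^sub>R F v)))
      else 0)"

primrec disc_traj :: "('a::euclidean_space) set set \<Rightarrow> ('a \<Rightarrow> 'c \<Rightarrow> 'a) \<Rightarrow> real \<Rightarrow> 'a \<Rightarrow> (nat \<Rightarrow> 'c) \<Rightarrow> nat \<Rightarrow> 'a" where
  "disc_traj \<T> f h y0 us 0 = y0"
| "disc_traj \<T> f h y0 us (Suc n) =
     disc_traj \<T> f h y0 us n + h *\<^sub>R interp \<T> (\<lambda>z. f z (us n)) (disc_traj \<T> f h y0 us n)"

definition J_disc :: "('a::euclidean_space) set set \<Rightarrow> ('a \<Rightarrow> 'c \<Rightarrow> 'a) \<Rightarrow> ('a \<Rightarrow> 'c \<Rightarrow> real)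
    \<Rightarrow> real \<Rightarrow> real \<Rightarrow> 'a \<Rightarrow> (nat \<Rightarrow> 'c) \<Rightarrow> real" where
  "J_disc \<T> f g lam h y0 us =
     h * (\<Sum>n. (1 - lam * h) ^ n * interp \<T> (\<lambda>z. g z (us n)) (disc_traj \<T> f h y0 us n))"

definition J_cont :: "('a \<Rightarrow> 'c \<Rightarrow> real) \<Rightarrow> real \<Rightarrow> (real \<Rightarrow> 'a) \<Rightarrow> (real \<Rightarrow> 'c) \<Rightarrow> real" where
  "J_cont g lam y u = integral {0..} (\<lambda>t. g (y t) (u t) * exp (- lam * t))"

end

theory Submission
  imports Defs
begin

definition bary :: "('a::real_vector) set \<Rightarrow> 'a \<Rightarrow> ('a \<Rightarrow> real) \<Rightarrow> bool" where
  "bary V y c \<longleftrightarrow> (\<forall>v\<in>V. 0 \<le> c v) \<and> sum c V = 1 \<and> (\<Sum>v\<in>V. c v *\<^sub>R v) = y"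

lemma bary_unique:
  fixes V :: "'a::real_vector set"
  assumes "finite V" "\<not> affine_dependent V" "sum c V = 1" "sum d V = 1"
    "(\<Sum>v\<in>V. c v *\<^sub>R v) = (\<Sum>v\<in>V. d v *\<^sub>R v)" "v \<in> V"
  shows "c v = d v"
proof (rule ccontr)
  assume ne: "c v \<noteq> d v"
  have "sum (\<lambda>w. c w - d w) V = 0" using assms by (simp add: sum_subtractf)
  moreover have "(\<Sum>w\<in>V. (c w - d w) *\<^sub>R w) = 0"
    using assms(5) by (simp add: scaleR_diff_left sum_subtractf)
  ultimately have "affine_dependent V"
    unfolding affine_dependent_explicit_finite[OF assms(1)]
    using ne assms(6) by (intro exI[of _ "\<lambda>w. c w - d w"]) auto
  with assms(2) show False by simp
qed

lemma bary_exists: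
  assumes "finite V" "y \<in> convex hull V"
  shows "\<exists>c. bary V y c"
  using assms by (auto simp: convex_hull_finite bary_def)

lemma simplex_data:
  fixes S :: "'a::euclidean_space set"
  assumes "n simplex S"
  shows "finite (verts S) \<and> \<not> affine_dependent (verts S) \<and> int (card (verts S)) = n + 1
         \<and> S = convex hull (verts S)"
proof -
  obtain C where C: "\<not> affine_dependent C" "int (card C) = n + 1" "S = convex hull C"
    using assms by (auto simp: simplex_def)
  have "verts S = C"
    using C extreme_point_of_convex_hull_affine_independent[OF C(1)]
    by (auto simp: verts_def)
  then show ?thesis using C aff_independent_finite by auto
qed

lemma hull_eq_aff_indep:
  fixes W :: "'a::euclidean_space set"
  assumes "\<not> affine_dependent W" "\<not> affine_dependent W'" "convex hull W = convex hull W'"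
  shows "W = W'"
proof -
  have "x \<in> W \<longleftrightarrow> x \<in> W'" for x
    using extreme_point_of_convex_hull_affine_independent[OF assms(1), of x]
        extreme_point_of_convex_hull_affine_independent[OF assms(2), of x] assms(3) by simp
  then show ?thesis by auto
qed

lemma sum_ext0:
  assumes "finite U" "W \<subseteq> U" "\<And>v. G v 0 = 0"
  shows "(\<Sum>v\<in>U. G v (if v \<in> W then d v else 0)) = (\<Sum>v\<in>W. G v (d v))"
proof -
  have "(\<Sum>v\<in>U. G v (if v \<in> W then d v else 0)) = (\<Sum>v\<in>W. G v (if v \<in> W then d v else 0))"
    using sum.mono_neutral_right[of U W "\<lambda>v. G v (if v \<in> W then d v else 0)"] assms by auto
  then show ?thesis by simp
qed

lemma consistency:
  fixes S S' :: "'a::euclidean_space set" and F :: "'a \<Rightarrow> 'b::real_vector"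
  assumes V: "finite V" "\<not> affine_dependent V" "S = convex hull V"
    and V': "finite V'" "\<not> affine_dependent V'" "S' = convex hull V'"
    and f1: "(S \<inter> S') face_of S" and f2: "(S \<inter> S') face_of S'"
    and c: "bary V y c" and c': "bary V' y c'"
  shows "(\<Sum>v\<in>V. c v *\<^sub>R F v) = (\<Sum>v\<in>V'. c' v *\<^sub>R F v)"
proof -
  obtain W where W: "W \<subseteq> V" "S \<inter> S' = convex hull W"
    using f1 face_of_convex_hull_affine_independent[OF V(2)] V(3) by auto
  obtain W' where W': "W' \<subseteq> V'" "S \<inter> S' = convex hull W'"
    using f2 face_of_convex_hull_affine_independent[OF V'(2)] V'(3) by auto
  have iW: "\<not> affine_dependent W" using W(1) V(2) affine_dependent_subset by blast
  have iW': "\<not> affine_dependent W'" using W'(1) V'(2) affine_dependent_subset by blast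
  have "W = W'" using hull_eq_aff_indep[OF iW iW'] W W' by simp
  have fW: "finite W" using W(1) V(1) finite_subset by blast
  have yS: "y \<in> S" using c V(3) by (auto simp: bary_def convex_hull_finite[OF V(1)])
  have yS': "y \<in> S'" using c' V'(3) by (auto simp: bary_def convex_hull_finite[OF V'(1)])
  obtain d where d: "bary W y d" using bary_exists[OF fW] W(2) yS yS' by auto
  define e where "e v = (if v \<in> W then d v else 0)" for v
  have gen: "\<And>U cc. finite U \<Longrightarrow> W \<subseteq> U \<Longrightarrow> \<not> affine_dependent U \<Longrightarrow> bary U y cc
      \<Longrightarrow> (\<Sum>v\<in>U. cc v *\<^sub>R F v) = (\<Sum>v\<in>W. d v *\<^sub>R F v)"
  proof -
    fix U cc assume U: "finite U" "W \<subseteq> U" "\<not> affine_dependent U" "bary U y cc"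
    have s1: "sum e U = 1" unfolding e_def using sum_ext0[OF U(1) U(2), where d=d and G="\<lambda>v x. x"] d by (simp add: bary_def)
    have s2: "(\<Sum>v\<in>U. e v *\<^sub>R v) = y" unfolding e_def using sum_ext0[OF U(1) U(2), where d=d and G="\<lambda>v x. x *\<^sub>R v"] d by (simp add: bary_def)
    have eq: "\<And>v. v \<in> U \<Longrightarrow> cc v = e v"
      using bary_unique[OF U(1) U(3), of cc e] U(4) s1 s2 by (auto simp: bary_def)
    have "(\<Sum>v\<in>U. cc v *\<^sub>R F v) = (\<Sum>v\<in>U. e v *\<^sub>R F v)" using eq by simp
    also have "\<dots> = (\<Sum>v\<in>W. d v *\<^sub>R F v)" unfolding e_def using sum_ext0[OF U(1) U(2), where d=d and G="\<lambda>v x. x *\<^sub>R F v"] by simp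
    finally show "(\<Sum>v\<in>U. cc v *\<^sub>R F v) = (\<Sum>v\<in>W. d v *\<^sub>R F v)" .
  qed
  show ?thesis using gen[OF V(1) W(1) V(2) c] gen[OF V'(1) _ V'(2) c'] W'(1) \<open>W = W'\<close> by simp
qed

lemma tri_facts:
  fixes \<T> :: "('a::euclidean_space) set set"
  assumes "regular_triangulation \<T> Om" "S \<in> \<T>"
  shows "finite (verts S)" "\<not> affine_dependent (verts S)" "card (verts S) = DIM('a) + 1"
    "S = convex hull (verts S)"
proof -
  have "int DIM('a) simplex S" using assms by (auto simp: regular_triangulation_def)
  from simplex_data[OF this] show "finite (verts S)" "\<not> affine_dependent (verts S)"
    "card (verts S) = DIM('a) + 1" "S = convex hull (verts S)" by auto
qed

lemma tri_subset: "regular_triangulation \<T> Om \<Longrightarrow> S \<in> \<T> \<Longrightarrow> S \<subseteq> Om"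
  by (auto simp: regular_triangulation_def)

lemma tri_finite: "regular_triangulation \<T> Om \<Longrightarrow> finite \<T>"
  by (auto simp: regular_triangulation_def triangulation_def)

lemma verts_sub: "regular_triangulation \<T> Om \<Longrightarrow> S \<in> \<T> \<Longrightarrow> verts S \<subseteq> S"
  by (metis hull_subset tri_facts(4))

lemma bary_mem: "finite V \<Longrightarrow> bary V y c \<Longrightarrow> y \<in> convex hull V"
  by (auto simp: convex_hull_finite bary_def)

lemma interp_eq:
  fixes \<T> :: "('a::euclidean_space) set set" and F :: "'a \<Rightarrow> 'b::real_vector"
  assumes T: "regular_triangulation \<T> Om" and S: "S \<in> \<T>" and c: "bary (verts S) y c"
  shows "interp \<T> F y = (\<Sum>v\<in>verts S. c v *\<^sub>R F v)"
proof -
  have yS: "y \<in> S" using bary_mem[OF tri_facts(1)[OF T S] c] tri_facts(4)[OF T S] by simp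
  then have yU: "y \<in> \<Union>\<T>" using S by auto
  define P where "P z \<longleftrightarrow> (\<exists>S\<in>\<T>. y \<in> S \<and> (\<exists>c. (\<forall>v\<in>verts S. 0 \<le> c v) \<and> sum c (verts S) = 1 \<and>
                   (\<Sum>v\<in>verts S. c v *\<^sub>R v) = y \<and> z = (\<Sum>v\<in>verts S. c v *\<^sub>R F v)))" for z
  have "P (\<Sum>v\<in>verts S. c v *\<^sub>R F v)" unfolding P_def using S yS c by (auto simp: bary_def)
  then have PS: "P (SOME z. P z)" by (rule someI)
  have iv: "interp \<T> F y = (SOME z. P z)" unfolding interp_def P_def using yU by simp
  from PS obtain S' c' where S': "S' \<in> \<T>" "y \<in> S'" "bary (verts S') y c'"
    "(SOME z. P z) = (\<Sum>v\<in>verts S'. c' v *\<^sub>R F v)" unfolding P_def bary_def by blast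
  have tri: "triangulation \<T>" using T by (simp add: regular_triangulation_def)
  have f1: "(S \<inter> S') face_of S" using tri S S'(1) by (simp add: triangulation_def)
  have f2: "(S \<inter> S') face_of S'" using tri S S'(1) unfolding triangulation_def by (metis Int_commute)
  show ?thesis unfolding iv S'(4)
    by (rule sym, rule consistency[OF tri_facts(1,2,4)[OF T S] tri_facts(1,2,4)[OF T S'(1)] f1 f2 c S'(3)])
qed

lemma interp_rep:
  fixes \<T> :: "('a::euclidean_space) set set" and F :: "'a \<Rightarrow> 'b::real_vector"
  assumes T: "regular_triangulation \<T> Om" and y: "y \<in> Om"
  shows "\<exists>S\<in>\<T>. y \<in> S \<and> (\<exists>c. bary (verts S) y c \<and> interp \<T> F y = (\<Sum>v\<in>verts S. c v *\<^sub>R F v))"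
proof -
  obtain S where S: "S \<in> \<T>" "y \<in> S" using T y by (auto simp: regular_triangulation_def)
  obtain c where c: "bary (verts S) y c"
    using bary_exists[OF tri_facts(1)[OF T S(1)]] tri_facts(4)[OF T S(1)] S(2) by auto
  show ?thesis using S c interp_eq[OF T S(1) c] by blast
qed

lemma bary_norm_bound:
  fixes F :: "'a::real_vector \<Rightarrow> 'b::real_normed_vector"
  assumes "finite V" "bary V y c" "\<And>v. v \<in> V \<Longrightarrow> norm (F v - G) \<le> B"
  shows "norm ((\<Sum>v\<in>V. c v *\<^sub>R F v) - G) \<le> B"
proof -
  have "(\<Sum>v\<in>V. c v *\<^sub>R F v) - G = (\<Sum>v\<in>V. c v *\<^sub>R (F v - G))"
    using assms(2) by (simp add: bary_def scaleR_diff_right sum_subtractf flip: scaleR_sum_left)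
  also have "norm \<dots> \<le> (\<Sum>v\<in>V. norm (c v *\<^sub>R (F v - G)))" by (rule norm_sum)
  also have "\<dots> \<le> (\<Sum>v\<in>V. c v * B)"
    using assms by (intro sum_mono) (auto simp: bary_def intro: mult_left_mono)
  also have "\<dots> = B" using assms(2) by (simp add: bary_def flip: sum_distrib_right)
  finally show ?thesis .
qed

lemma interp_bound:
  fixes \<T> :: "('a::euclidean_space) set set" and F :: "'a \<Rightarrow> 'b::real_normed_vector"
  assumes T: "regular_triangulation \<T> Om" and y: "y \<in> Om"
    and B: "\<And>S v. S \<in> \<T> \<Longrightarrow> y \<in> S \<Longrightarrow> v \<in> verts S \<Longrightarrow> norm (F v - G) \<le> B"
  shows "norm (interp \<T> F y - G) \<le> B"
proof -
  obtain S c where S: "S \<in> \<T>" "y \<in> S" "bary (verts S) y c"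
    "interp \<T> F y = (\<Sum>v\<in>verts S. c v *\<^sub>R F v)" using interp_rep[OF T y, of F] by blast
  show ?thesis unfolding S(4) using bary_norm_bound[OF tri_facts(1)[OF T S(1)] S(3)] B S by blast
qed

lemma linear_functional_inner:
  fixes l :: "'a::euclidean_space \<Rightarrow> real"
  assumes "linear l"
  shows "\<exists>D. \<forall>x. l x = D \<bullet> x"
proof -
  define D where "D = (\<Sum>b\<in>Basis. l b *\<^sub>R b)"
  have "l x = D \<bullet> x" for x
  proof -
    have "l x = l (\<Sum>b\<in>Basis. (x \<bullet> b) *\<^sub>R b)" by (simp add: euclidean_representation)
    also have "\<dots> = (\<Sum>b\<in>Basis. (x \<bullet> b) * l b)"
      using assms by (simp add: linear_sum linear_scale)
    also have "\<dots> = D \<bullet> x" by (simp add: D_def inner_sum_right inner_commute mult.commute)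
    finally show ?thesis .
  qed
  then show ?thesis by blast
qed

lemma bary_affine:
  fixes F :: "'a::euclidean_space \<Rightarrow> real"
  assumes fin: "finite V" and ind: "\<not> affine_dependent V"
  shows "\<exists>a D. \<forall>y c. bary V y c \<longrightarrow> (\<Sum>v\<in>V. c v *\<^sub>R F v) = a + D \<bullet> y"
proof (cases "V = {}")
  case True then show ?thesis by (auto simp: bary_def)
next
  case False
  then obtain v0 where v0: "v0 \<in> V" by auto
  have VV: "insert v0 (V - {v0}) = V" using v0 by auto
  define B where "B = (\<lambda>x. -v0 + x) ` (V - {v0})"
  define G where "G x = F (x + v0) - F v0" for x
  have "v0 \<notin> V - {v0}" by simp
  from affine_dependent_iff_dependent[OF this] VV ind have indB: "\<not> dependent B"
    unfolding B_def by metis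
  obtain l where l: "linear l" "\<And>x. x \<in> B \<Longrightarrow> l x = G x"
    using linear_independent_extend[OF indB, of G] by metis
  obtain D where D: "\<And>x. l x = D \<bullet> x" using linear_functional_inner[OF l(1)] by blast
  have Fv: "F v = F v0 + l (v - v0)" if "v \<in> V" for v
  proof (cases "v = v0")
    case True then show ?thesis using linear_0[OF l(1)] by simp
  next
    case False
    then have "-v0 + v \<in> B" using that unfolding B_def by auto
    then have "l (-v0 + v) = F v - F v0" using l(2) unfolding G_def by simp
    then show ?thesis by simp
  qed
  have "(\<Sum>v\<in>V. c v *\<^sub>R F v) = F v0 - D \<bullet> v0 + D \<bullet> y" if c: "bary V y c" for y c
  proof -
    have "(\<Sum>v\<in>V. c v *\<^sub>R F v) = (\<Sum>v\<in>V. c v * F v0 + c v * l (v - v0))"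
    proof (rule sum.cong[OF refl])
      fix v assume "v \<in> V"
      then have e: "F v = F v0 + l (v - v0)" by (rule Fv)
      show "c v *\<^sub>R F v = c v * F v0 + c v * l (v - v0)" unfolding e by (simp add: distrib_left)
    qed
    also have "\<dots> = F v0 + (\<Sum>v\<in>V. c v * l (v - v0))"
      using c by (simp add: sum.distrib bary_def flip: sum_distrib_right)
    also have "(\<Sum>v\<in>V. c v * l (v - v0)) = l (\<Sum>v\<in>V. c v *\<^sub>R (v - v0))"
      using l(1) by (simp add: linear_sum linear_scale)
    also have "(\<Sum>v\<in>V. c v *\<^sub>R (v - v0)) = y - v0"
      using c by (simp add: bary_def scaleR_diff_right sum_subtractf flip: scaleR_sum_left)
    finally show ?thesis using D by (simp add: inner_diff_right)
  qed
  then show ?thesis by blast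
qed

lemma simplex_affine:
  fixes \<T> :: "('a::euclidean_space) set set" and F :: "'a \<Rightarrow> real"
  assumes T: "regular_triangulation \<T> Om" and S: "S \<in> \<T>"
  shows "\<exists>a D. \<forall>y\<in>S. interp \<T> F y = a + D \<bullet> y"
proof -
  obtain a D where aD: "\<forall>y c. bary (verts S) y c \<longrightarrow> (\<Sum>v\<in>verts S. c v *\<^sub>R F v) = a + D \<bullet> y"
    using bary_affine[OF tri_facts(1,2)[OF T S]] by blast
  have "interp \<T> F y = a + D \<bullet> y" if yS: "y \<in> S" for y
  proof -
    obtain c where c: "bary (verts S) y c"
      using bary_exists[OF tri_facts(1)[OF T S]] tri_facts(4)[OF T S] yS by auto
    show ?thesis using interp_eq[OF T S c, of F] aD c by simp
  qed
  then show ?thesis by blast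
qed

lemma interior_simplex_ne:
  fixes \<T> :: "('a::euclidean_space) set set"
  assumes T: "regular_triangulation \<T> Om" and S: "S \<in> \<T>"
  shows "interior S \<noteq> {}"
proof -
  have sx: "int DIM('a) simplex S" using T S by (auto simp: regular_triangulation_def)
  have "aff_dim S = int DIM('a)" using aff_dim_simplex[OF sx] .
  then have "interior S = rel_interior S" using interior_rel_interior[of S] by simp
  moreover have "convex S" using tri_facts(4)[OF T S] by (metis convex_convex_hull)
  moreover have "S \<noteq> {}"
  proof -
    have "card (verts S) > 0" using tri_facts(3)[OF T S] by simp
    then have "verts S \<noteq> {}" by auto
    then show ?thesis using verts_sub[OF T S] by auto
  qed
  ultimately show ?thesis using rel_interior_eq_empty[of S] by simp
qed

lemma interp_gderiv:
  fixes \<T> :: "('a::euclidean_space) set set" and F :: "'a \<Rightarrow> real"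
  assumes aff: "\<forall>y\<in>S. interp \<T> F y = a + D \<bullet> y" and z: "z \<in> interior S"
  shows "GDERIV (interp \<T> F) z :> D"
proof -
  have d: "((\<lambda>y. a + D \<bullet> y) has_derivative (\<lambda>h. h \<bullet> D)) (at z)"
    by (auto intro!: derivative_eq_intros simp: inner_commute)
  have e: "a + D \<bullet> x = interp \<T> F x" if "x \<in> interior S" for x
  proof -
    have "x \<in> S" using that interior_subset by blast
    then show ?thesis using aff by simp
  qed
  show ?thesis unfolding gderiv_def
    by (rule has_derivative_transform_within_open[OF d open_interior z e])
qed

lemma norm_vec_bound:
  fixes x :: "real^'n"
  assumes "\<And>j. \<bar>x $ j\<bar> \<le> M"
  shows "norm x \<le> sqrt (real CARD('n)) * M"
proof -
  have M0: "0 \<le> M" using assms[of undefined] by linarith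
  have "norm x = sqrt (\<Sum>j\<in>UNIV. (x $ j)\<^sup>2)" by (simp add: norm_vec_def L2_set_def)
  also have "\<dots> \<le> sqrt (\<Sum>j\<in>(UNIV::'n set). M\<^sup>2)"
  proof (intro real_sqrt_le_mono sum_mono)
    fix j :: 'n
    have "\<bar>x $ j\<bar>\<^sup>2 \<le> M\<^sup>2" by (rule power_mono[OF assms]) simp
    then show "(x $ j)\<^sup>2 \<le> M\<^sup>2" by simp
  qed
  also have "\<dots> = sqrt (real CARD('n)) * M" using M0 by (simp add: real_sqrt_mult)
  finally show ?thesis .
qed

lemma interp_component:
  fixes \<T> :: "(real^'n) set set" and f :: "real^'n \<Rightarrow> real^'k"
  assumes T: "regular_triangulation \<T> Om" and p: "p \<in> Om"
  shows "interp \<T> f p $ j = interp \<T> (\<lambda>x. f x $ j) p"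
proof -
  obtain S c where S: "S \<in> \<T>" "p \<in> S" "bary (verts S) p c"
    "interp \<T> f p = (\<Sum>v\<in>verts S. c v *\<^sub>R f v)" using interp_rep[OF T p, of f] by blast
  show ?thesis using interp_eq[OF T S(1) S(3), of "\<lambda>x. f x $ j"] S(4) by (simp add: sum_component)
qed

lemma simplex_lip:
  fixes \<T> :: "(real^'n) set set" and f :: "real^'n \<Rightarrow> real^'n"
  assumes T: "regular_triangulation \<T> Om" and S: "S \<in> \<T>"
    and H: "\<forall>z\<in>interior S. \<forall>j. \<forall>D. GDERIV (interp \<T> (\<lambda>x. f x $ j)) z :> D \<longrightarrow> norm D \<le> B"
    and p: "p \<in> S" and q: "q \<in> S"
  shows "norm (interp \<T> f p - interp \<T> f q) \<le> sqrt (real CARD('n)) * (B * norm (p - q))"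
proof (rule norm_vec_bound)
  fix j
  obtain z where z: "z \<in> interior S" using interior_simplex_ne[OF T S] by auto
  obtain a D where aD: "\<forall>y\<in>S. interp \<T> (\<lambda>x. f x $ j) y = a + D \<bullet> y"
    using simplex_affine[OF T S] by blast
  have "norm D \<le> B" using H z interp_gderiv[OF aD z] by blast
  have pO: "p \<in> Om" and qO: "q \<in> Om" using tri_subset[OF T S] p q by auto
  have "(interp \<T> f p - interp \<T> f q) $ j = D \<bullet> (p - q)"
    using interp_component[OF T pO, of f j] interp_component[OF T qO, of f j] aD p q
    by (simp add: inner_diff_right)
  also have "\<bar>\<dots>\<bar> \<le> norm D * norm (p - q)" by (rule Cauchy_Schwarz_ineq2)
  also have "\<dots> \<le> B * norm (p - q)" using \<open>norm D \<le> B\<close> by (simp add: mult_right_mono)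
  finally show "\<bar>(interp \<T> f p - interp \<T> f q) $ j\<bar> \<le> B * norm (p - q)" .
qed

lemma lip_local_global:
  fixes F :: "'a::real_normed_vector \<Rightarrow> 'b::real_normed_vector"
  assumes X: "convex X"
    and loc: "\<And>p. p \<in> X \<Longrightarrow> \<exists>e>0. \<forall>q\<in>X. norm (q - p) < e \<longrightarrow> norm (F q - F p) \<le> K * norm (q - p)"
    and a: "a \<in> X" and b: "b \<in> X"
  shows "norm (F b - F a) \<le> K * norm (b - a)"
proof (cases "b = a")
  case True then show ?thesis by simp
next
  case False
  define d where "d = norm (b - a)"
  have d: "d > 0" using False by (simp add: d_def)
  define g where "g t = (1 - t) *\<^sub>R a + t *\<^sub>R b" for t :: real
  have gX: "g t \<in> X" if "0 \<le> t" "t \<le> 1" for t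
    unfolding g_def using convexD[OF X a b, of "1 - t" t] that by simp
  have gd: "norm (g s - g t) = \<bar>s - t\<bar> * d" for s t
  proof -
    have "g s - g t = (s - t) *\<^sub>R (b - a)" by (simp add: g_def algebra_simps)
    then show ?thesis by (simp add: d_def)
  qed
  have g0: "g 0 = a" and g1: "g 1 = b" by (simp_all add: g_def)
  define M where "M = {t \<in> {0..1}. norm (F (g t) - F a) \<le> K * t * d}"
  have M0: "0 \<in> M" using g0 by (simp add: M_def)
  have Mne: "M \<noteq> {}" using M0 by auto
  have Mbdd: "bdd_above M" unfolding M_def by (rule bdd_aboveI[of _ 1]) auto
  define \<tau> where "\<tau> = Sup M"
  have up: "t \<le> \<tau>" if "t \<in> M" for t using cSup_upper[OF that Mbdd] by (simp add: \<tau>_def)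
  have t0: "0 \<le> \<tau>" using up[OF M0] .
  have t1: "\<tau> \<le> 1" unfolding \<tau>_def by (rule cSup_least[OF Mne]) (auto simp: M_def)
  obtain e where e: "e > 0" "\<And>q. q \<in> X \<Longrightarrow> norm (q - g \<tau>) < e \<Longrightarrow> norm (F q - F (g \<tau>)) \<le> K * norm (q - g \<tau>)"
    using loc[OF gX[OF t0 t1]] by blast
  have tM: "\<tau> \<in> M"
  proof -
    have "\<tau> - e / d < \<tau>" using e d by simp
    then obtain s where s: "s \<in> M" "\<tau> - e / d < s" using less_cSup_iff[OF Mne Mbdd] unfolding \<tau>_def by blast
    have s0: "0 \<le> s" "s \<le> 1" "s \<le> \<tau>" using s up by (auto simp: M_def)
    have "(\<tau> - s) * d < e" using s(2) d by (simp add: field_simps)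
    moreover have "\<bar>s - \<tau>\<bar> = \<tau> - s" using s0 by simp
    ultimately have ns: "norm (g s - g \<tau>) < e" unfolding gd[of s \<tau>] by (simp only:)
    have "norm (F (g \<tau>) - F a) \<le> norm (F (g s) - F (g \<tau>)) + norm (F (g s) - F a)"
    proof -
      have "F (g \<tau>) - F a = (F (g s) - F a) - (F (g s) - F (g \<tau>))" by simp
      then have "norm (F (g \<tau>) - F a) \<le> norm (F (g s) - F a) + norm (F (g s) - F (g \<tau>))"
        using norm_triangle_ineq4 by metis
      then show ?thesis by linarith
    qed
    also have "\<dots> \<le> K * ((\<tau> - s) * d) + K * s * d"
    proof (rule add_mono)
      show "norm (F (g s) - F (g \<tau>)) \<le> K * ((\<tau> - s) * d)"
        using e(2)[OF gX[OF s0(1,2)] ns] unfolding gd[of s \<tau>] using s0 by simp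
      show "norm (F (g s) - F a) \<le> K * s * d" using s(1) by (simp add: M_def)
    qed
    also have "\<dots> = K * \<tau> * d" by (simp add: algebra_simps)
    finally show ?thesis using t0 t1 by (simp add: M_def)
  qed
  have "\<tau> = 1"
  proof (rule ccontr)
    assume "\<tau> \<noteq> 1"
    then have lt: "\<tau> < 1" using t1 by simp
    define s where "s = min 1 (\<tau> + e / (2 * d))"
    have s0: "\<tau> < s" "s \<le> 1" using lt e d by (auto simp: s_def)
    have "(s - \<tau>) * d < e"
    proof -
      have "(s - \<tau>) * d \<le> (e / (2 * d)) * d" using d s0 by (intro mult_right_mono) (auto simp: s_def)
      also have "\<dots> < e" using d e by simp
      finally show ?thesis .
    qed
    moreover have "\<bar>s - \<tau>\<bar> = s - \<tau>" using s0 by simp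
    ultimately have ns: "norm (g s - g \<tau>) < e" unfolding gd[of s \<tau>] by (simp only:)
    have "norm (F (g s) - F a) \<le> norm (F (g s) - F (g \<tau>)) + norm (F (g \<tau>) - F a)"
      by (rule norm_diff_triangle_le[of _ "F (g \<tau>)"]) simp_all
    also have "\<dots> \<le> K * ((s - \<tau>) * d) + K * \<tau> * d"
    proof (rule add_mono)
      show "norm (F (g s) - F (g \<tau>)) \<le> K * ((s - \<tau>) * d)"
        using e(2)[OF gX ns] unfolding gd[of s \<tau>] using s0 t0 by simp
      show "norm (F (g \<tau>) - F a) \<le> K * \<tau> * d" using tM by (simp add: M_def)
    qed
    also have "\<dots> = K * s * d" by (simp add: algebra_simps)
    finally have sM: "s \<in> M" using s0 t0 by (simp add: M_def)
    show False using up[OF sM] s0(1) by linarith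
  qed
  then show ?thesis using tM g1 by (simp add: M_def d_def)
qed

lemma interp_lip:
  fixes \<T> :: "(real^'n) set set" and f :: "real^'n \<Rightarrow> real^'n"
  assumes T: "regular_triangulation \<T> Om" and cO: "convex Om"
    and H: "\<forall>S\<in>\<T>. \<forall>z\<in>interior S. \<forall>j. \<forall>D. GDERIV (interp \<T> (\<lambda>x. f x $ j)) z :> D \<longrightarrow> norm D \<le> B"
    and p: "p \<in> Om" and q: "q \<in> Om"
  shows "norm (interp \<T> f q - interp \<T> f p) \<le> (sqrt (real CARD('n)) * B) * norm (q - p)"
proof (rule lip_local_global[OF cO _ p q])
  fix p assume p: "p \<in> Om"
  define Bad where "Bad = \<Union>{S\<in>\<T>. p \<notin> S}"
  have "closed Bad" unfolding Bad_def
  proof (rule closed_Union)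
    show "finite {S \<in> \<T>. p \<notin> S}" using tri_finite[OF T] by simp
    show "\<forall>S\<in>{S \<in> \<T>. p \<notin> S}. closed S"
    proof
      fix S assume "S \<in> {S \<in> \<T>. p \<notin> S}"
      then have S: "S \<in> \<T>" by simp
      have "compact (convex hull (verts S))" by (rule finite_imp_compact_convex_hull[OF tri_facts(1)[OF T S]])
      then show "closed S" using tri_facts(4)[OF T S] compact_imp_closed by metis
    qed
  qed
  moreover have "p \<notin> Bad" unfolding Bad_def by auto
  ultimately obtain e where e: "e > 0" "ball p e \<subseteq> - Bad"
    using open_contains_ball[of "- Bad"] by (metis ComplI open_Compl)
  show "\<exists>e>0. \<forall>q\<in>Om. norm (q - p) < e \<longrightarrow> norm (interp \<T> f q - interp \<T> f p) \<le> sqrt (real CARD('n)) * B * norm (q - p)"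
  proof (intro exI[of _ e] conjI ballI impI)
    show "e > 0" by fact
    fix q assume q: "q \<in> Om" "norm (q - p) < e"
    obtain S where S: "S \<in> \<T>" "q \<in> S" using T q by (auto simp: regular_triangulation_def)
    have "q \<in> ball p e" using q by (simp add: dist_norm norm_minus_commute)
    then have "q \<notin> Bad" using e by auto
    then have pS: "p \<in> S" using S unfolding Bad_def by auto
    show "norm (interp \<T> f q - interp \<T> f p) \<le> sqrt (real CARD('n)) * B * norm (q - p)"
      using simplex_lip[OF T S(1) _ S(2) pS, where B=B] H S by (simp add: mult.assoc)
  qed
qed

lemma gronwall_disc:
  fixes e :: "nat \<Rightarrow> real"
  assumes a: "0 \<le> a" and b: "0 \<le> b" and e0: "e 0 \<le> 0"
    and st: "\<And>i. i < N \<Longrightarrow> e (Suc i) \<le> (1 + a) * e i + b"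
  shows "i \<le> N \<Longrightarrow> e i \<le> real i * b * (1 + a) ^ i"
proof (induction i)
  case 0 then show ?case using e0 by simp
next
  case (Suc i)
  then have iN: "i < N" by simp
  have IH: "e i \<le> real i * b * (1 + a) ^ i" using Suc by simp
  have "e (Suc i) \<le> (1 + a) * e i + b" using st[OF iN] .
  also have "\<dots> \<le> (1 + a) * (real i * b * (1 + a) ^ i) + b"
    using IH a by (intro add_right_mono mult_left_mono) auto
  also have "\<dots> \<le> real i * b * (1 + a) ^ Suc i + b * (1 + a) ^ Suc i"
  proof -
    have "1 \<le> (1 + a) ^ Suc i" using a by (intro one_le_power) simp
    then have "b \<le> b * (1 + a) ^ Suc i" using b by (simp add: mult_le_cancel_left1)
    then show ?thesis by (simp add: algebra_simps)
  qed
  also have "\<dots> = real (Suc i) * b * (1 + a) ^ Suc i" by (simp add: algebra_simps)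
  finally show ?case .
qed

lemma lin_step:
  fixes y G :: "real \<Rightarrow> 'v::real_normed_vector"
  assumes der: "\<And>t. 0 \<le> t \<Longrightarrow> (y has_vector_derivative G t) (at t within {0..})"
    and ab: "0 \<le> a" "a \<le> b" and B: "\<And>x. a \<le> x \<Longrightarrow> x \<le> b \<Longrightarrow> norm (G x - G a) \<le> B"
  shows "norm (y b - y a - (b - a) *\<^sub>R G a) \<le> (b - a) * B"
proof -
  have d: "(y has_vector_derivative G x) (at x within {a..b})" if "x \<in> {a..b}" for x
    using has_vector_derivative_within_subset[OF der[of x], of "{a..b}"] that ab by auto
  have "norm (y b - y a - (b - a) *\<^sub>R G a) \<le> norm (b - a) * B"
    by (rule vector_differentiable_bound_linearization[OF d _ _ ]) 
       (use ab B in \<open>auto simp: closed_segment_eq_real_ivl\<close>)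
  then show ?thesis using ab by simp
qed

lemma norm_tri3:
  fixes a b c :: "'v::real_normed_vector"
  shows "norm (a + b + c) \<le> norm a + norm b + norm c"
proof -
  have "norm (a + b + c) \<le> norm (a + b) + norm c" by (rule norm_triangle_ineq)
  also have "norm (a + b) \<le> norm a + norm b" by (rule norm_triangle_ineq)
  finally show ?thesis by simp
qed

lemma invariance:
  fixes f :: "'v::euclidean_space \<Rightarrow> 'w::real_normed_vector \<Rightarrow> 'v" and y :: "real \<Rightarrow> 'v"
  assumes cl: "closed Om" and Lf: "0 \<le> Lf"
    and lipy: "\<And>a b w. w \<in> U \<Longrightarrow> norm (f a w - f b w) \<le> Lf * norm (a - b)"
    and lipu: "\<And>a w w'. w \<in> U \<Longrightarrow> w' \<in> U \<Longrightarrow> norm (f a w - f a w') \<le> Lf * norm (w - w')"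
    and bnd: "\<And>a w. a \<in> Om \<Longrightarrow> w \<in> U \<Longrightarrow> norm (f a w) \<le> Mf"
    and inv: "\<And>a w k. a \<in> Om \<Longrightarrow> w \<in> U \<Longrightarrow> 0 < k \<Longrightarrow> k \<le> kmax \<Longrightarrow> a + k *\<^sub>R f a w \<in> Om"
    and kmax: "0 < kmax"
    and uU: "\<And>t. 0 \<le> t \<Longrightarrow> u t \<in> U"
    and ulip: "\<And>s t. 0 \<le> s \<Longrightarrow> 0 \<le> t \<Longrightarrow> norm (u t - u s) \<le> Lu * \<bar>t - s\<bar>"
    and y0: "y 0 \<in> Om"
    and der: "\<And>t. 0 \<le> t \<Longrightarrow> (y has_vector_derivative f (y t) (u t)) (at t within {0..})"
    and T: "0 \<le> T"
  shows "y T \<in> Om"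
proof (cases "T = 0")
  case True then show ?thesis using y0 by simp
next
  case False
  then have Tp: "0 < T" using T by simp
  define G where "G t = f (y t) (u t)" for t
  have derG: "\<And>t. 0 \<le> t \<Longrightarrow> (y has_vector_derivative G t) (at t within {0..})"
    using der by (simp add: G_def)
  have Mf: "0 \<le> Mf" using bnd[OF y0 uU[of 0]] norm_ge_zero[of "f (y 0) (u 0)"] by linarith
  have Lu: "0 \<le> Lu"
  proof -
    have "norm (u 1 - u 0) \<le> Lu" using ulip[of 0 1] by simp
    then show ?thesis using norm_ge_zero[of "u 1 - u 0"] by linarith
  qed
  have cont: "continuous_on {0..T} y"
  proof -
    have "continuous (at x within {0..T}) y" if "x \<in> {0..T}" for x
      using has_vector_derivative_continuous[OF has_vector_derivative_within_subset[OF der[of x], of "{0..T}"]] that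
      by auto
    then show ?thesis using continuous_on_eq_continuous_within by blast
  qed
  have "compact (y ` {0..T})" by (rule compact_continuous_image[OF cont compact_Icc])
  then obtain Y where Y: "\<And>x. x \<in> {0..T} \<Longrightarrow> norm (y x) \<le> Y"
    using compact_imp_bounded[of "y ` {0..T}"] unfolding bounded_iff by blast
  define R where "R = Mf + Lf * (Y + norm (y 0))"
  have GR: "norm (G x) \<le> R" if x: "x \<in> {0..T}" for x
  proof -
    have ux: "u x \<in> U" using uU x by auto
    have "norm (G x) \<le> norm (f (y 0) (u x)) + norm (f (y x) (u x) - f (y 0) (u x))"
      unfolding G_def using norm_triangle_sub[of "f (y x) (u x)" "f (y 0) (u x)"] by simp
    also have "\<dots> \<le> Mf + Lf * (Y + norm (y 0))"
    proof (rule add_mono)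
      show "norm (f (y 0) (u x)) \<le> Mf" by (rule bnd[OF y0 ux])
      have "norm (y x - y 0) \<le> Y + norm (y 0)"
        using norm_triangle_ineq4[of "y x" "y 0"] Y[OF x] by linarith
      then show "norm (f (y x) (u x) - f (y 0) (u x)) \<le> Lf * (Y + norm (y 0))"
        using lipy[OF ux, of "y x" "y 0"] Lf by (meson mult_left_mono order_trans)
    qed
    finally show ?thesis by (simp add: R_def)
  qed
  have R0: "0 \<le> R"
  proof -
    have "norm (G 0) \<le> R" using GR T by simp
    then show ?thesis using norm_ge_zero[of "G 0"] by linarith
  qed
  have ylip: "norm (y t - y s) \<le> 3 * R * (t - s)" if st: "0 \<le> s" "s \<le> t" "t \<le> T" for s t
  proof -
    have "norm (y t - y s - (t - s) *\<^sub>R G s) \<le> (t - s) * (2 * R)"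
    proof (rule lin_step[OF derG st(1,2)])
      fix x assume x: "s \<le> x" "x \<le> t"
      have "norm (G x - G s) \<le> norm (G x) + norm (G s)" by (rule norm_triangle_ineq4)
      also have "\<dots> \<le> R + R" using GR x st by (intro add_mono) auto
      finally show "norm (G x - G s) \<le> 2 * R" by simp
    qed
    moreover have "norm ((t - s) *\<^sub>R G s) \<le> (t - s) * R"
      using GR[of s] st by (simp add: mult_left_mono)
    moreover have "norm (y t - y s) \<le> norm (y t - y s - (t - s) *\<^sub>R G s) + norm ((t - s) *\<^sub>R G s)"
      using norm_triangle_sub[of "y t - y s" "(t - s) *\<^sub>R G s"] by (simp add: add.commute)
    ultimately show ?thesis by (simp add: algebra_simps)
  qed
  define Q where "Q = T * (Lf * (3 * R + Lu)) * exp (Lf * T)"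
  have Q0: "0 \<le> Q" using T Lf R0 Lu by (simp add: Q_def)
  have euler: "\<exists>z\<in>Om. norm (y T - z) \<le> Q * (T / real N)" if N: "0 < N" "T / real N \<le> kmax" for N :: nat
  proof -
    define k where "k = T / real N"
    have k: "0 < k" "k \<le> kmax" using N Tp by (auto simp: k_def)
    have Nk: "real N * k = T" using N by (simp add: k_def)
    define z where "z = rec_nat (y 0) (\<lambda>i zi. zi + k *\<^sub>R f zi (u (real i * k)))"
    have z0: "z 0 = y 0" and zS: "\<And>i. z (Suc i) = z i + k *\<^sub>R f (z i) (u (real i * k))"
      by (simp_all add: z_def)
    have zO: "z i \<in> Om" for i
    proof (induction i)
      case 0 then show ?case using y0 z0 by simp
    next
      case (Suc i)
      have "u (real i * k) \<in> U" using uU k by simp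
      then show ?case unfolding zS using inv[OF Suc _ k] by simp
    qed
    define e where "e i = norm (y (real i * k) - z i)" for i
    define B where "B = Lf * (3 * R + Lu) * k"
    have B0: "0 \<le> B" using Lf R0 Lu k by (simp add: B_def)
    have step: "e (Suc i) \<le> (1 + k * Lf) * e i + k * B" if i: "i < N" for i
    proof -
      define t where "t = real i * k"
      have t0: "0 \<le> t" using k by (simp add: t_def)
      have tS: "real (Suc i) * k = t + k" by (simp add: t_def algebra_simps)
      have tT: "t + k \<le> T"
      proof -
        have "real (Suc i) \<le> real N" using i by simp
        then have "real (Suc i) * k \<le> real N * k" using k by (intro mult_right_mono) auto
        then show ?thesis using tS Nk by simp
      qed
      have ut: "u t \<in> U" using uU t0 by simp
      have lin: "norm (y (t + k) - y t - ((t + k) - t) *\<^sub>R G t) \<le> ((t + k) - t) * B"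
      proof (rule lin_step[OF derG t0])
        show "t \<le> t + k" using k by simp
        fix x assume x: "t \<le> x" "x \<le> t + k"
        have ux: "u x \<in> U" using uU t0 x by simp
        have "norm (G x - G t) = norm ((f (y x) (u x) - f (y x) (u t)) + (f (y x) (u t) - f (y t) (u t)))"
          by (simp add: G_def)
        also have "\<dots> \<le> norm (f (y x) (u x) - f (y x) (u t)) + norm (f (y x) (u t) - f (y t) (u t))"
          by (rule norm_triangle_ineq)
        also have "\<dots> \<le> Lf * (Lu * k) + Lf * (3 * R * k)"
        proof (rule add_mono)
          have "norm (u x - u t) \<le> Lu * \<bar>x - t\<bar>" using ulip[of t x] t0 x by linarith
          also have "\<dots> \<le> Lu * k" using x Lu by (intro mult_left_mono) auto
          finally show "norm (f (y x) (u x) - f (y x) (u t)) \<le> Lf * (Lu * k)"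
            using lipu[OF ux ut, of "y x"] Lf by (meson mult_left_mono order_trans)
          have "norm (y x - y t) \<le> 3 * R * (x - t)" using ylip[of t x] t0 x tT by simp
          also have "\<dots> \<le> 3 * R * k" using x R0 by (intro mult_left_mono) auto
          finally show "norm (f (y x) (u t) - f (y t) (u t)) \<le> Lf * (3 * R * k)"
            using lipy[OF ut, of "y x" "y t"] Lf by (meson mult_left_mono order_trans)
        qed
        also have "\<dots> = B" by (simp add: B_def algebra_simps)
        finally show "norm (G x - G t) \<le> B" .
      qed
      have "y (t + k) - z (Suc i) = (y (t + k) - y t - k *\<^sub>R G t) + (y t - z i)
              + k *\<^sub>R (f (y t) (u t) - f (z i) (u t))"
        unfolding zS t_def G_def by (simp add: algebra_simps)
      then have "e (Suc i) \<le> norm (y (t + k) - y t - k *\<^sub>R G t) + norm (y t - z i)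
              + norm (k *\<^sub>R (f (y t) (u t) - f (z i) (u t)))"
        unfolding e_def tS using norm_tri3 by metis
      also have "\<dots> \<le> k * B + e i + k * (Lf * e i)"
      proof (intro add_mono)
        show "norm (y (t + k) - y t - k *\<^sub>R G t) \<le> k * B" using lin by simp
        show "norm (y t - z i) \<le> e i" by (simp add: e_def t_def)
        show "norm (k *\<^sub>R (f (y t) (u t) - f (z i) (u t))) \<le> k * (Lf * e i)"
          using lipy[OF ut, of "y t" "z i"] k by (simp add: e_def t_def mult_left_mono)
      qed
      also have "\<dots> = (1 + k * Lf) * e i + k * B" by (simp add: algebra_simps)
      finally show ?thesis .
    qed
    have eN: "e N \<le> real N * (k * B) * (1 + k * Lf) ^ N"
      by (rule gronwall_disc[of "k * Lf" "k * B" e N N]) (use k Lf B0 step in \<open>auto simp: e_def z0\<close>)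
    also have "\<dots> \<le> real N * (k * B) * exp (Lf * T)"
    proof (intro mult_left_mono)
      have "(1 + k * Lf) ^ N \<le> exp (k * Lf) ^ N"
        using k Lf by (intro power_mono) auto
      also have "\<dots> = exp (Lf * T)" using Nk by (simp add: exp_of_nat_mult[symmetric] algebra_simps)
      finally show "(1 + k * Lf) ^ N \<le> exp (Lf * T)" .
      show "0 \<le> real N * (k * B)" using k B0 by simp
    qed
    also have "\<dots> = Q * k" using Nk by (simp add: Q_def B_def algebra_simps)
    finally have "norm (y T - z N) \<le> Q * (T / real N)" using Nk by (simp add: e_def k_def)
    then show ?thesis using zO by blast
  qed
  show ?thesis
  proof (rule iffD1[OF closed_approachable[OF cl]], intro allI impI)
    fix \<eta> :: real assume eta: "0 < \<eta>"
    obtain N :: nat where N: "T / kmax + Q * T / \<eta> + 1 < real N" using reals_Archimedean2 by blast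
    have N0: "0 < N" using N Tp kmax Q0 eta by (smt (verit) divide_nonneg_pos mult_nonneg_nonneg of_nat_0_less_iff)
    have "T / kmax < real N" using N Q0 Tp eta by (smt (verit) divide_nonneg_pos mult_nonneg_nonneg)
    then have "T / real N \<le> kmax" using N0 kmax by (simp add: field_simps)
    then obtain z where z: "z \<in> Om" "norm (y T - z) \<le> Q * (T / real N)" using euler N0 by blast
    have "Q * T / \<eta> < real N" using N Q0 Tp kmax by (smt (verit) divide_nonneg_pos)
    then have "Q * (T / real N) < \<eta>" using N0 eta by (simp add: field_simps)
    moreover have "dist z (y T) = norm (y T - z)" by (simp add: dist_norm norm_minus_commute)
    ultimately have "dist z (y T) < \<eta>" using z(2) by linarith
    then show "\<exists>z\<in>Om. dist z (y T) < \<eta>" using z(1) by blast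
  qed
qed

lemma inv_one_minus_exp:
  fixes x :: real assumes x: "0 < x"
  shows "1 / (1 - exp (-x)) \<le> 1 / x + 1"
proof -
  have e: "exp (-x) < 1" using x by simp
  have "(1 + x) * exp (-x) \<le> exp x * exp (-x)"
    by (rule mult_right_mono) (simp_all add: exp_ge_add_one_self)
  also have "\<dots> = 1" by (simp add: exp_minus)
  finally have k: "(1 + x) * exp (-x) \<le> 1" .
  have "1 / (1 - exp (-x)) \<le> (1 + x) / x"
    using e x k by (simp add: divide_simps algebra_simps)
  also have "\<dots> = 1 / x + 1" using x by (simp add: field_simps)
  finally show ?thesis .
qed

lemma x_exp_le:
  fixes x :: real assumes x: "0 \<le> x"
  shows "x * exp (-x) \<le> exp (-(x / 2))"
proof -
  have "1 + x / 4 \<le> exp (x / 4)" by (rule exp_ge_add_one_self)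
  then have "(1 + x / 4)\<^sup>2 \<le> (exp (x / 4))\<^sup>2" using x by (intro power_mono) auto
  also have "(exp (x / 4))\<^sup>2 = exp (x / 2)" by (simp add: power2_eq_square flip: exp_add)
  finally have "(1 + x / 4)\<^sup>2 \<le> exp (x / 2)" .
  moreover have "x \<le> (1 + x / 4)\<^sup>2"
  proof -
    have "0 \<le> (1 - x / 4)\<^sup>2" by simp
    then show ?thesis by (simp add: power2_eq_square algebra_simps)
  qed
  ultimately have "x \<le> exp (x / 2)" by linarith
  then have "x * exp (-x) \<le> exp (x / 2) * exp (-x)" by (rule mult_right_mono) simp
  also have "\<dots> = exp (-(x / 2))" by (simp flip: exp_add)
  finally show ?thesis .
qed

lemma sums_abs_bound:
  fixes d w :: "nat \<Rightarrow> real"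
  assumes "d sums D" "w sums W" "\<And>n. \<bar>d n\<bar> \<le> w n"
  shows "\<bar>D\<bar> \<le> W"
proof -
  have "D \<le> W" using sums_le[OF _ assms(1,2)] assms(3) abs_le_D1 by blast
  moreover have "-D \<le> W" using sums_le[OF _ sums_minus[OF assms(1)] assms(2)] assms(3) abs_le_D2 by blast
  ultimately show ?thesis by linarith
qed

lemma geom_exp_sums:
  fixes x :: real assumes "0 < x"
  shows "(\<lambda>n. exp (- x) ^ n) sums (1 / (1 - exp (-x)))"
  using geometric_sums[of "exp (-x)"] assms by simp

lemma integral_split_sums:
  fixes F :: "real \<Rightarrow> real"
  assumes cont: "continuous_on {0..} F" and bnd: "\<And>t. 0 \<le> t \<Longrightarrow> \<bar>F t\<bar> \<le> M * exp (- lam * t)"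
    and lam: "0 < lam" and h: "0 < h"
  shows "F integrable_on {0..}" "(\<lambda>n. integral {real n * h..real (Suc n) * h} F) sums integral {0..} F"
proof -
  have M: "0 \<le> M" using bnd[of 0] by simp
  define fN where "fN N x = (if x \<in> {..real N * h} then F x else 0)" for N :: nat and x
  have ivl: "{..a} \<inter> {0..} = {0..a}" for a :: real by auto
  have intI: "F integrable_on {a..b}" if "0 \<le> a" for a b
    by (rule integrable_continuous_interval[OF continuous_on_subset[OF cont]]) (use that in auto)
  have intN: "fN N integrable_on {0..}" for N
    unfolding fN_def integrable_restrict_Int ivl using intI[of 0] by simp
  have gint: "(\<lambda>x. M * exp (- lam * x)) integrable_on {0..}"
    using integrable_on_cmult_left[OF integrable_on_exp_minus_to_infinity[OF lam, of 0], of M] by simp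
  have le: "norm (fN N x) \<le> M * exp (- lam * x)" if "x \<in> {0..}" for N x
    using bnd[of x] that M by (auto simp: fN_def)
  have conv: "(\<lambda>N. fN N x) \<longlonglongrightarrow> F x" if "x \<in> {0..}" for x
  proof (rule tendsto_eventually)
    obtain N0 :: nat where N0: "x / h < real N0" using reals_Archimedean2 by blast
    show "\<forall>\<^sub>F N in sequentially. fN N x = F x"
    proof (rule eventually_sequentiallyI[of N0])
      fix N assume "N0 \<le> N"
      then have "real N0 \<le> real N" by simp
      then have "real N0 * h \<le> real N * h" using h by (intro mult_right_mono) auto
      moreover have "x < real N0 * h" using N0 h by (simp add: field_simps)
      ultimately have "x \<le> real N * h" by linarith
      then show "fN N x = F x" by (simp add: fN_def)
    qed
  qed
  note dc = dominated_convergence[OF intN gint le conv]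
  show "F integrable_on {0..}" using dc(1) .
  have eqN: "integral {0..} (fN N) = (\<Sum>n<N. integral {real n * h..real (Suc n) * h} F)" for N
  proof -
    have "integral {0..} (fN N) = integral {0..real N * h} F"
      unfolding fN_def Henstock_Kurzweil_Integration.integral_restrict_Int ivl ..
    also have "\<dots> = (\<Sum>n<N. integral {real n * h..real (Suc n) * h} F)"
    proof (induction N)
      case 0 then show ?case by simp
    next
      case (Suc N)
      have "integral {0..real N * h} F + integral {real N * h..real (Suc N) * h} F = integral {0..real (Suc N) * h} F"
        by (rule Henstock_Kurzweil_Integration.integral_combine) (use h intI in \<open>auto simp: algebra_simps\<close>)
      then show ?case using Suc by simp
    qed
    finally show ?thesis .
  qed
  show "(\<lambda>n. integral {real n * h..real (Suc n) * h} F) sums integral {0..} F"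
    unfolding sums_def using dc(2) eqN by simp
qed

lemma ylip_gen:
  fixes y G :: "real \<Rightarrow> 'v::real_normed_vector"
  assumes der: "\<And>t. 0 \<le> t \<Longrightarrow> (y has_vector_derivative G t) (at t within {0..})"
    and st: "0 \<le> s" "s \<le> t" and GR: "\<And>x. s \<le> x \<Longrightarrow> x \<le> t \<Longrightarrow> norm (G x) \<le> R"
  shows "norm (y t - y s) \<le> 3 * R * (t - s)"
proof -
  have "norm (y t - y s - (t - s) *\<^sub>R G s) \<le> (t - s) * (2 * R)"
  proof (rule lin_step[OF der st(1,2)])
    fix x assume x: "s \<le> x" "x \<le> t"
    have "norm (G x - G s) \<le> norm (G x) + norm (G s)" by (rule norm_triangle_ineq4)
    also have "\<dots> \<le> R + R" using GR x st by (intro add_mono) auto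
    finally show "norm (G x - G s) \<le> 2 * R" by simp
  qed
  moreover have "norm ((t - s) *\<^sub>R G s) \<le> (t - s) * R"
    using GR[of s] st by (simp add: mult_left_mono)
  moreover have "norm (y t - y s) \<le> norm (y t - y s - (t - s) *\<^sub>R G s) + norm ((t - s) *\<^sub>R G s)"
    using norm_triangle_sub[of "y t - y s" "(t - s) *\<^sub>R G s"] by (simp add: add.commute)
  ultimately show ?thesis by (simp add: algebra_simps)
qed

lemma sum_bound_B:
  fixes lam h mu P A Mg k :: real
  assumes lam: "0 < lam" and h: "0 < h" "h \<le> 1 / (2 * lam)" and mu: "0 < mu"
    and P: "0 \<le> P" and A: "0 \<le> A" and Mg: "0 \<le> Mg" and k: "0 \<le> k"
  defines "q \<equiv> exp (- (lam * h))" and "r \<equiv> exp (- (mu * h / 2))" and "\<delta> \<equiv> 1 - lam * h"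
  shows "\<exists>S. (\<lambda>i. h * (P * (h + k) * q ^ i + A * (h + k) * r ^ i + Mg * ((1 - q) * q ^ i + (q ^ i - \<delta> ^ i)))) sums S
            \<and> S \<le> (h + k) * (P * (3 / (2 * lam)) + A * (2 / mu + 1 / (2 * lam)) + 2 * Mg)"
proof -
  have lh: "0 < lam * h" using lam h by simp
  have lh2: "lam * h \<le> 1 / 2" using h lam by (simp add: field_simps)
  have q1: "q < 1" "0 < q" using lh by (simp_all add: q_def)
  have r1: "r < 1" "0 < r" using mu h by (simp_all add: r_def)
  have d1: "\<bar>\<delta>\<bar> < 1" using lh lh2 by (simp add: \<delta>_def)
  have sq: "(\<lambda>i. q ^ i) sums (1 / (1 - q))" using geometric_sums[of q] q1 by simp
  have sr: "(\<lambda>i. r ^ i) sums (1 / (1 - r))" using geometric_sums[of r] r1 by simp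
  have sd: "(\<lambda>i. \<delta> ^ i) sums (1 / (1 - \<delta>))" using geometric_sums[of \<delta>] d1 by simp
  define SE where "SE = 1 / (1 - q)"
  define SR where "SR = 1 / (1 - r)"
  have s1: "(\<lambda>i. P * (h + k) * q ^ i) sums (P * (h + k) * SE)" using sums_mult[OF sq] by (simp add: SE_def)
  have s2: "(\<lambda>i. A * (h + k) * r ^ i) sums (A * (h + k) * SR)" using sums_mult[OF sr] by (simp add: SR_def)
  have s3: "(\<lambda>i. (1 - q) * q ^ i + (q ^ i - \<delta> ^ i)) sums ((1 - q) * SE + (SE - 1 / (1 - \<delta>)))"
    using sums_add[OF sums_mult[OF sq, of "1 - q"] sums_diff[OF sq sd]] by (simp add: SE_def)
  have s4: "(\<lambda>i. Mg * ((1 - q) * q ^ i + (q ^ i - \<delta> ^ i))) sums (Mg * ((1 - q) * SE + (SE - 1 / (1 - \<delta>))))"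
    using sums_mult[OF s3] .
  define S where "S = h * (P * (h + k) * SE + A * (h + k) * SR + Mg * ((1 - q) * SE + (SE - 1 / (1 - \<delta>))))"
  have sS: "(\<lambda>i. h * (P * (h + k) * q ^ i + A * (h + k) * r ^ i + Mg * ((1 - q) * q ^ i + (q ^ i - \<delta> ^ i)))) sums S"
    unfolding S_def using sums_mult[OF sums_add[OF sums_add[OF s1 s2] s4], of h] by simp
  have hSE: "h * SE \<le> 1 / lam + h"
  proof -
    have "SE \<le> 1 / (lam * h) + 1" unfolding SE_def q_def by (rule inv_one_minus_exp[OF lh])
    then have "h * SE \<le> h * (1 / (lam * h) + 1)" using h by (intro mult_left_mono) auto
    also have "\<dots> = 1 / lam + h" using h lam by (simp add: field_simps)
    finally show ?thesis .
  qed
  have hSR: "h * SR \<le> 2 / mu + h"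
  proof -
    have "0 < mu * h / 2" using mu h by simp
    then have "SR \<le> 1 / (mu * h / 2) + 1" unfolding SR_def r_def by (rule inv_one_minus_exp)
    then have "h * SR \<le> h * (1 / (mu * h / 2) + 1)" using h by (intro mult_left_mono) auto
    also have "\<dots> = 2 / mu + h" using h mu by (simp add: field_simps)
    finally show ?thesis .
  qed
  have q1SE: "(1 - q) * SE = 1" using q1 by (simp add: SE_def)
  have dd: "1 / (1 - \<delta>) = 1 / (lam * h)" by (simp add: \<delta>_def)
  have hlast: "h * (SE - 1 / (1 - \<delta>)) \<le> h"
  proof -
    have "h * (SE - 1 / (1 - \<delta>)) = h * SE - 1 / lam" using h lam by (simp add: dd right_diff_distrib field_simps)
    then show ?thesis using hSE by linarith
  qed
  have hle: "h \<le> 1 / (2 * lam)" using h by simp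
  have "S = P * (h + k) * (h * SE) + A * (h + k) * (h * SR) + Mg * h + Mg * (h * (SE - 1 / (1 - \<delta>)))"
    unfolding S_def q1SE by (simp add: algebra_simps)
  also have "\<dots> \<le> P * (h + k) * (3 / (2 * lam)) + A * (h + k) * (2 / mu + 1 / (2 * lam)) + Mg * (h + k) + Mg * (h + k)"
  proof (intro add_mono)
    have "h * SE \<le> 3 / (2 * lam)" using hSE hle by (simp add: field_simps) 
    then show "P * (h + k) * (h * SE) \<le> P * (h + k) * (3 / (2 * lam))" using P h k by (intro mult_left_mono) auto
    have "h * SR \<le> 2 / mu + 1 / (2 * lam)" using hSR hle by linarith
    then show "A * (h + k) * (h * SR) \<le> A * (h + k) * (2 / mu + 1 / (2 * lam))" using A h k by (intro mult_left_mono) auto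
    show "Mg * h \<le> Mg * (h + k)" using Mg k by (intro mult_left_mono) auto
    have "h * (SE - 1 / (1 - \<delta>)) \<le> h + k" using hlast k by linarith
    then show "Mg * (h * (SE - 1 / (1 - \<delta>))) \<le> Mg * (h + k)" using Mg by (intro mult_left_mono) auto
  qed
  also have "\<dots> = (h + k) * (P * (3 / (2 * lam)) + A * (2 / mu + 1 / (2 * lam)) + 2 * Mg)"
    by (simp add: algebra_simps add_divide_distrib)
  finally show ?thesis using sS by blast
qed

lemma mesh_facts:
  fixes \<T> :: "('a::euclidean_space) set set"
  assumes T: "regular_triangulation \<T> Om" and S: "S \<in> \<T>" and p: "p \<in> S" and v: "v \<in> verts S"
  shows "norm (v - p) \<le> mesh \<T>" "0 \<le> mesh \<T>"
proof -
  have bS: "bounded S"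
    using tri_facts(4)[OF T S] finite_imp_compact_convex_hull[OF tri_facts(1)[OF T S]] compact_imp_bounded
    by metis
  have fin: "finite (diameter ` \<T>)" using tri_finite[OF T] by simp
  have dl: "diameter S \<le> mesh \<T>" unfolding mesh_def using fin S by (intro Max_ge) auto
  have "dist v p \<le> diameter S" by (rule diameter_bounded_bound[OF bS]) (use verts_sub[OF T S] v p in auto)
  then show "norm (v - p) \<le> mesh \<T>" using dl by (simp add: dist_norm)
  show "0 \<le> mesh \<T>" using diameter_ge_0[OF bS] dl by linarith
qed

lemma cont_lip:
  fixes u :: "real \<Rightarrow> 'a::real_normed_vector"
  assumes "\<And>s t. 0 \<le> s \<Longrightarrow> 0 \<le> t \<Longrightarrow> norm (u t - u s) \<le> Lu * \<bar>t - s\<bar>" "0 \<le> Lu"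
  shows "continuous_on {0..} u"
  unfolding continuous_on_iff
proof (intro ballI allI impI)
  fix x e :: real assume x: "x \<in> {0..}" and e: "0 < e"
  show "\<exists>d>0. \<forall>x'\<in>{0..}. dist x' x < d \<longrightarrow> dist (u x') (u x) < e"
  proof (intro exI[of _ "e / (Lu + 1)"] conjI ballI impI)
    show "0 < e / (Lu + 1)" using e assms(2) by simp
    fix x' :: real assume x': "x' \<in> {0..}" "dist x' x < e / (Lu + 1)"
    have "dist (u x') (u x) \<le> Lu * \<bar>x' - x\<bar>" using assms(1)[of x x'] x x' by (simp add: dist_norm)
    also have "\<dots> \<le> (Lu + 1) * \<bar>x' - x\<bar>" by (simp add: algebra_simps)
    also have "\<dots> < (Lu + 1) * (e / (Lu + 1))"
      using x'(2) assms(2) by (intro mult_strict_left_mono) (auto simp: dist_real_def)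
    also have "\<dots> = e" using assms(2) by simp
    finally show "dist (u x') (u x) < e" .
  qed
qed

lemma main_bound:
  fixes f :: "real^'n \<Rightarrow> real^'m \<Rightarrow> real^'n" and g :: "real^'n \<Rightarrow> real^'m \<Rightarrow> real"
    and \<T> :: "(real^'n) set set" and y :: "real \<Rightarrow> real^'n" and u :: "real \<Rightarrow> real^'m"
  assumes lam: "0 < lam" and h: "0 < h" "h \<le> 1 / (2 * lam)"
    and T: "regular_triangulation \<T> Om" and cO: "convex Om" and clO: "closed Om"
    and Lb: "0 \<le> Lb" "Lb < lam"
    and Ilip: "\<And>w p q. w \<in> U \<Longrightarrow> p \<in> Om \<Longrightarrow> q \<in> Om \<Longrightarrow>
        norm (interp \<T> (\<lambda>z. f z w) q - interp \<T> (\<lambda>z. f z w) p) \<le> Lb * norm (q - p)"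
    and Lf: "0 \<le> L_f" and Lg: "0 \<le> L_g" and Lu: "0 \<le> L_u"
    and f_lip_y: "\<And>y y' u. u \<in> U \<Longrightarrow> norm (f y u - f y' u) \<le> L_f * norm (y - y')"
    and f_lip_u: "\<And>y u u'. u \<in> U \<Longrightarrow> u' \<in> U \<Longrightarrow> norm (f y u - f y u') \<le> L_f * norm (u - u')"
    and g_lip_y: "\<And>y y' u. u \<in> U \<Longrightarrow> \<bar>g y u - g y' u\<bar> \<le> L_g * norm (y - y')"
    and g_lip_u: "\<And>y u u'. u \<in> U \<Longrightarrow> u' \<in> U \<Longrightarrow> \<bar>g y u - g y u'\<bar> \<le> L_g * norm (u - u')"
    and g_cont: "continuous_on UNIV (\<lambda>(y, u). g y u)"
    and Mf: "\<And>a w. a \<in> Om \<Longrightarrow> w \<in> U \<Longrightarrow> norm (f a w) \<le> Mf"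
    and Mg: "\<And>a w. a \<in> Om \<Longrightarrow> w \<in> U \<Longrightarrow> \<bar>g a w\<bar> \<le> M_g"
    and invariant: "\<And>y u h. y \<in> Om \<Longrightarrow> u \<in> U \<Longrightarrow> 0 < h \<Longrightarrow> h \<le> 1 / (2 * lam) \<Longrightarrow> y + h *\<^sub>R f y u \<in> Om"
    and uU: "\<forall>t\<ge>0. u t \<in> U"
    and ulip: "\<forall>s\<ge>0. \<forall>t\<ge>0. norm (u t - u s) \<le> L_u * \<bar>t - s\<bar>"
    and y0: "y0 \<in> Om" "y 0 = y0"
    and der: "\<forall>t\<ge>0. (y has_vector_derivative f (y t) (u t)) (at t within {0..})"
  shows "\<bar>J_cont g lam y u - J_disc \<T> f g lam h y0 (\<lambda>i. u (real i * h))\<bar>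
    \<le> (h + mesh \<T>) * (L_g * (3 * Mf + L_u + 1) * (3 / (2 * lam))
        + L_g * (L_f * (3 * Mf + L_u + 1)) / (lam - Lb) * (2 / (lam - Lb) + 1 / (2 * lam)) + 2 * M_g)"
proof -
  define k where "k = mesh \<T>"
  define mu where "mu = lam - Lb"
  have mu: "0 < mu" using Lb by (simp add: mu_def)
  define K0 where "K0 = L_f * (3 * Mf + L_u + 1)"
  define P where "P = L_g * (3 * Mf + L_u + 1)"
  define A where "A = L_g * K0 / mu"
  have uU': "\<And>t. 0 \<le> t \<Longrightarrow> u t \<in> U" using uU by simp
  have ulip': "\<And>s t. 0 \<le> s \<Longrightarrow> 0 \<le> t \<Longrightarrow> norm (u t - u s) \<le> L_u * \<bar>t - s\<bar>" using ulip by simp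
  have der': "\<And>t. 0 \<le> t \<Longrightarrow> (y has_vector_derivative f (y t) (u t)) (at t within {0..})" using der by simp
  have Mf0: "0 \<le> Mf" using Mf[OF y0(1) uU'[of 0]] norm_ge_zero[of "f y0 (u 0)"] by linarith
  have Mg0: "0 \<le> M_g" using Mg[OF y0(1) uU'[of 0]] abs_ge_zero[of "g y0 (u 0)"] by linarith
  have K0: "0 \<le> K0" using Lf Mf0 Lu by (simp add: K0_def)
  have P0: "0 \<le> P" using Lg Mf0 Lu by (simp add: P_def)
  have A0: "0 \<le> A" using Lg K0 mu by (simp add: A_def)
  obtain S0 where S0: "S0 \<in> \<T>" "y0 \<in> S0" using T y0 by (auto simp: regular_triangulation_def)
  have k0: "0 \<le> k" unfolding k_def using S0 verts_sub[OF T S0(1)] mesh_facts(2)[OF T S0(1) S0(2)]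
    tri_facts(3)[OF T S0(1)] by (metis card.empty ex_in_conv nat.distinct(1) add_is_0 one_neq_zero)
  have vdist: "\<And>S p v. S \<in> \<T> \<Longrightarrow> p \<in> S \<Longrightarrow> v \<in> verts S \<Longrightarrow> norm (v - p) \<le> k"
    unfolding k_def by (rule mesh_facts(1)[OF T])
  have SO: "\<And>S. S \<in> \<T> \<Longrightarrow> S \<subseteq> Om" using tri_subset[OF T] by blast
  have yOm: "\<And>t. 0 \<le> t \<Longrightarrow> y t \<in> Om"
  proof -
    fix t :: real assume t: "0 \<le> t"
    have k0': "0 < 1 / (2 * lam)" using lam by simp
    have y0': "y 0 \<in> Om" using y0 by simp
    show "y t \<in> Om"
      by (rule invariance[where kmax="1 / (2 * lam)", OF clO Lf f_lip_y f_lip_u Mf invariant k0' uU' ulip' y0' der' t])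
  qed
  have GR: "\<And>t. 0 \<le> t \<Longrightarrow> norm (f (y t) (u t)) \<le> Mf" using Mf yOm uU' by blast
  have ylip: "\<And>s t. 0 \<le> s \<Longrightarrow> s \<le> t \<Longrightarrow> norm (y t - y s) \<le> 3 * Mf * (t - s)"
    by (rule ylip_gen[OF der']) (use GR in auto)
  have Ierr: "norm (interp \<T> (\<lambda>z. f z w) p - f p w) \<le> L_f * k" if "p \<in> Om" "w \<in> U" for p w
  proof (rule interp_bound[OF T that(1)])
    fix S v assume Sv: "S \<in> \<T>" "p \<in> S" "v \<in> verts S"
    have "norm (f v w - f p w) \<le> L_f * norm (v - p)" by (rule f_lip_y[OF that(2)])
    also have "\<dots> \<le> L_f * k" using vdist[OF Sv] Lf by (intro mult_left_mono)
    finally show "norm (f v w - f p w) \<le> L_f * k" .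
  qed
  have Igerr: "\<bar>interp \<T> (\<lambda>z. g z w) p - g p w\<bar> \<le> L_g * k" if "p \<in> Om" "w \<in> U" for p w
  proof -
    have "norm (interp \<T> (\<lambda>z. g z w) p - g p w) \<le> L_g * k"
    proof (rule interp_bound[OF T that(1)])
      fix S v assume Sv: "S \<in> \<T>" "p \<in> S" "v \<in> verts S"
      have "\<bar>g v w - g p w\<bar> \<le> L_g * norm (v - p)" by (rule g_lip_y[OF that(2)])
      also have "\<dots> \<le> L_g * k" using vdist[OF Sv] Lg by (intro mult_left_mono)
      finally show "norm (g v w - g p w) \<le> L_g * k" by simp
    qed
    then show ?thesis by simp
  qed
  have Igb: "\<bar>interp \<T> (\<lambda>z. g z w) p\<bar> \<le> M_g" if "p \<in> Om" "w \<in> U" for p w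
  proof -
    have "norm (interp \<T> (\<lambda>z. g z w) p - 0) \<le> M_g"
    proof (rule interp_bound[OF T that(1)])
      fix S v assume Sv: "S \<in> \<T>" "p \<in> S" "v \<in> verts S"
      have "v \<in> Om" using Sv verts_sub[OF T] SO by blast
      then show "norm (g v w - 0) \<le> M_g" using Mg that(2) by simp
    qed
    then show ?thesis by simp
  qed
  define us where "us = (\<lambda>i. u (real i * h))"
  have usU: "us i \<in> U" for i using uU' h by (simp add: us_def)
  define yh where "yh = disc_traj \<T> f h y0 us"
  have yh0: "yh 0 = y0" and yhS: "\<And>i. yh (Suc i) = yh i + h *\<^sub>R interp \<T> (\<lambda>z. f z (us i)) (yh i)"
    by (simp_all add: yh_def)
  have yhOm: "yh i \<in> Om" for i
  proof (induction i)
    case 0 then show ?case using y0 yh0 by simp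
  next
    case (Suc i)
    obtain S c where S: "S \<in> \<T>" "yh i \<in> S" "bary (verts S) (yh i) c"
      "interp \<T> (\<lambda>z. f z (us i)) (yh i) = (\<Sum>v\<in>verts S. c v *\<^sub>R f v (us i))"
      using interp_rep[OF T Suc, of "\<lambda>z. f z (us i)"] by blast
    have "yh (Suc i) = (\<Sum>v\<in>verts S. c v *\<^sub>R v) + h *\<^sub>R (\<Sum>v\<in>verts S. c v *\<^sub>R f v (us i))"
      using yhS S(3,4) by (simp add: bary_def)
    also have "\<dots> = (\<Sum>v\<in>verts S. c v *\<^sub>R (v + h *\<^sub>R f v (us i)))"
      by (simp add: scaleR_add_right sum.distrib scaleR_sum_right mult.commute)
    also have "\<dots> \<in> Om"
    proof (rule convex_sum[OF tri_facts(1)[OF T S(1)] cO])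
      show "(\<Sum>v\<in>verts S. c v) = 1" using S(3) by (simp add: bary_def)
      show "\<And>v. v \<in> verts S \<Longrightarrow> 0 \<le> c v" using S(3) by (simp add: bary_def)
      fix v assume "v \<in> verts S"
      then have "v \<in> Om" using verts_sub[OF T S(1)] SO[OF S(1)] by blast
      then show "v + h *\<^sub>R f v (us i) \<in> Om" using invariant[OF _ usU h] by simp
    qed
    finally show ?case .
  qed
  define e where "e i = norm (y (real i * h) - yh i)" for i
  have step: "e (Suc i) \<le> (1 + h * Lb) * e i + h * (K0 * (h + k))" for i
  proof -
    define t where "t = real i * h"
    have t0: "0 \<le> t" using h by (simp add: t_def)
    have tS: "real (Suc i) * h = t + h" by (simp add: t_def algebra_simps)
    have ut: "u t = us i" by (simp add: t_def us_def)
    have ytO: "y t \<in> Om" using yOm t0 .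
    have utU: "u t \<in> U" using uU' t0 by simp
    define G where "G x = f (y x) (u x)" for x
    have lin: "norm (y (t + h) - y t - ((t + h) - t) *\<^sub>R G t) \<le> ((t + h) - t) * (L_f * (3 * Mf + L_u) * h)"
    proof (rule lin_step[OF _ t0])
      show "\<And>x. 0 \<le> x \<Longrightarrow> (y has_vector_derivative G x) (at x within {0..})" using der' by (simp add: G_def)
      show "t \<le> t + h" using h by simp
      fix x assume x: "t \<le> x" "x \<le> t + h"
      have ux: "u x \<in> U" using uU' t0 x by simp
      have "norm (G x - G t) = norm ((f (y x) (u x) - f (y x) (u t)) + (f (y x) (u t) - f (y t) (u t)))"
        by (simp add: G_def)
      also have "\<dots> \<le> norm (f (y x) (u x) - f (y x) (u t)) + norm (f (y x) (u t) - f (y t) (u t))"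
        by (rule norm_triangle_ineq)
      also have "\<dots> \<le> L_f * (L_u * h) + L_f * (3 * Mf * h)"
      proof (rule add_mono)
        have "norm (u x - u t) \<le> L_u * \<bar>x - t\<bar>" using ulip'[of t x] t0 x by linarith
        also have "\<dots> \<le> L_u * h" using x Lu by (intro mult_left_mono) auto
        finally show "norm (f (y x) (u x) - f (y x) (u t)) \<le> L_f * (L_u * h)"
          using f_lip_u[OF ux utU, of "y x"] Lf by (meson mult_left_mono order_trans)
        have "norm (y x - y t) \<le> 3 * Mf * (x - t)" using ylip[of t x] t0 x by simp
        also have "\<dots> \<le> 3 * Mf * h" using x Mf0 by (intro mult_left_mono) auto
        finally show "norm (f (y x) (u t) - f (y t) (u t)) \<le> L_f * (3 * Mf * h)"
          using f_lip_y[OF utU, of "y x" "y t"] Lf by (meson mult_left_mono order_trans)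
      qed
      also have "\<dots> = L_f * (3 * Mf + L_u) * h" by (simp add: algebra_simps)
      finally show "norm (G x - G t) \<le> L_f * (3 * Mf + L_u) * h" .
    qed
    define If where "If z = interp \<T> (\<lambda>z. f z (us i)) z" for z
    have eq: "y (t + h) - yh (Suc i) = (y (t + h) - y t - h *\<^sub>R G t) + (y t - yh i) + h *\<^sub>R (G t - If (yh i))"
      unfolding yhS If_def G_def by (simp add: algebra_simps)
    have "e (Suc i) = norm ((y (t + h) - y t - h *\<^sub>R G t) + (y t - yh i) + h *\<^sub>R (G t - If (yh i)))"
      unfolding e_def tS eq ..
    also have "\<dots> \<le> norm (y (t + h) - y t - h *\<^sub>R G t) + norm (y t - yh i) + norm (h *\<^sub>R (G t - If (yh i)))"
      by (rule norm_tri3)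
    also have "\<dots> \<le> h * (L_f * (3 * Mf + L_u) * h) + e i + h * (L_f * k + Lb * e i)"
    proof (intro add_mono)
      show "norm (y (t + h) - y t - h *\<^sub>R G t) \<le> h * (L_f * (3 * Mf + L_u) * h)" using lin by simp
      show "norm (y t - yh i) \<le> e i" by (simp add: e_def t_def)
      have "norm (G t - If (yh i)) = norm ((G t - If (y t)) + (If (y t) - If (yh i)))" by simp
      also have "\<dots> \<le> norm (G t - If (y t)) + norm (If (y t) - If (yh i))" by (rule norm_triangle_ineq)
      also have "\<dots> \<le> L_f * k + Lb * e i"
      proof (rule add_mono)
        have "norm (If (y t) - G t) \<le> L_f * k" unfolding If_def G_def ut by (rule Ierr[OF ytO usU])
        then show "norm (G t - If (y t)) \<le> L_f * k" by (simp add: norm_minus_commute)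
        show "norm (If (y t) - If (yh i)) \<le> Lb * e i"
          unfolding If_def e_def t_def[symmetric] by (rule Ilip[OF usU yhOm ytO])
      qed
      finally show "norm (h *\<^sub>R (G t - If (yh i))) \<le> h * (L_f * k + Lb * e i)"
        using h by (simp add: mult_left_mono)
    qed
    also have "\<dots> \<le> (1 + h * Lb) * e i + h * (K0 * (h + k))"
    proof -
      have ex: "K0 * (h + k) = L_f * (3 * Mf + L_u) * h + L_f * k + (L_f * (3 * Mf + L_u) * k + L_f * h)"
        by (simp add: K0_def algebra_simps)
      have "0 \<le> L_f * (3 * Mf + L_u) * k + L_f * h" using Lf Mf0 Lu k0 h by simp
      then have "L_f * (3 * Mf + L_u) * h + L_f * k \<le> K0 * (h + k)" using ex by linarith
      then have "h * (L_f * (3 * Mf + L_u) * h + L_f * k) \<le> h * (K0 * (h + k))" using h by (intro mult_left_mono) auto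
      then show ?thesis by (simp add: algebra_simps)
    qed
    finally show ?thesis .
  qed
  have e0: "e 0 \<le> 0" by (simp add: e_def yh0 y0)
  have ebound: "e i \<le> real i * (h * (K0 * (h + k))) * (1 + h * Lb) ^ i" for i
  proof (rule gronwall_disc[of "h * Lb" "h * (K0 * (h + k))" e i i])
    show "0 \<le> h * Lb" using h Lb by simp
    show "0 \<le> h * (K0 * (h + k))" using h K0 k0 by simp
    show "e 0 \<le> 0" by (rule e0)
    show "\<And>j. j < i \<Longrightarrow> e (Suc j) \<le> (1 + h * Lb) * e j + h * (K0 * (h + k))" using step by blast
  qed simp
  define q where "q = exp (- (lam * h))"
  define r where "r = exp (- (mu * h / 2))"
  have q0: "0 < q" "q < 1" using lam h by (simp_all add: q_def)
  have eE: "L_g * e i * q ^ i \<le> A * (h + k) * r ^ i" for i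
  proof -
    have pq: "(1 + h * Lb) ^ i * q ^ i \<le> exp (- (mu * h)) ^ i"
    proof -
      have "(1 + h * Lb) * q \<le> exp (h * Lb) * exp (- (lam * h))"
        unfolding q_def by (intro mult_right_mono) (simp_all add: exp_ge_add_one_self)
      also have "\<dots> = exp (- (mu * h))" by (simp add: mu_def algebra_simps flip: exp_add)
      finally have "(1 + h * Lb) * q \<le> exp (- (mu * h))" .
      then have "((1 + h * Lb) * q) ^ i \<le> exp (- (mu * h)) ^ i"
        using h Lb q0 by (intro power_mono) auto
      then show ?thesis by (simp add: power_mult_distrib)
    qed
    have ei0: "0 \<le> e i" by (simp add: e_def)
    have "e i * q ^ i \<le> real i * (h * (K0 * (h + k))) * (1 + h * Lb) ^ i * q ^ i"
      using ebound[of i] q0 by (intro mult_right_mono) auto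
    also have "\<dots> = real i * (h * (K0 * (h + k))) * ((1 + h * Lb) ^ i * q ^ i)" by (simp add: algebra_simps)
    also have "\<dots> \<le> real i * (h * (K0 * (h + k))) * exp (- (mu * h)) ^ i"
      using pq h K0 k0 by (intro mult_left_mono) auto
    also have "\<dots> = real i * (h * (K0 * (h + k))) * exp (- (mu * h * real i))"
      by (simp add: exp_of_nat_mult[symmetric] algebra_simps)
    also have "\<dots> = K0 * (h + k) / mu * ((mu * h * real i) * exp (- (mu * h * real i)))"
      using mu by (simp add: field_simps)
    also have "\<dots> \<le> K0 * (h + k) / mu * exp (- (mu * h * real i / 2))"
      using x_exp_le[of "mu * h * real i"] mu h K0 k0 by (intro mult_left_mono) auto
    also have "\<dots> = K0 * (h + k) / mu * r ^ i"
      by (simp add: r_def exp_of_nat_mult[symmetric] algebra_simps)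
    finally have "e i * q ^ i \<le> K0 * (h + k) / mu * r ^ i" .
    then have "L_g * (e i * q ^ i) \<le> L_g * (K0 * (h + k) / mu * r ^ i)" using Lg by (intro mult_left_mono)
    then show ?thesis by (simp add: A_def algebra_simps)
  qed
  define F where "F t = g (y t) (u t) * exp (- lam * t)" for t
  have ycont: "continuous_on {0..} y"
  proof -
    have "continuous (at x within {0..}) y" if "x \<in> {0..}" for x
      using has_vector_derivative_continuous[OF der'[of x]] that by simp
    then show ?thesis using continuous_on_eq_continuous_within by blast
  qed
  have ucont: "continuous_on {0..} u" by (rule cont_lip[OF ulip' Lu])
  have Fcont: "continuous_on {0..} F"
  proof -
    have "continuous_on {0..} (\<lambda>t. (y t, u t))" by (intro continuous_on_Pair ycont ucont)
    from continuous_on_compose2[OF g_cont this] have "continuous_on {0..} (\<lambda>t. g (y t) (u t))" by simp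
    then show ?thesis unfolding F_def by (intro continuous_intros)
  qed
  have Fb: "\<bar>F t\<bar> \<le> M_g * exp (- lam * t)" if "0 \<le> t" for t
    using Mg[OF yOm[OF that] uU'[OF that]] by (simp add: F_def abs_mult mult_right_mono)
  note isplit = integral_split_sums[OF Fcont Fb lam h(1)]
  have Fe: "F = (\<lambda>t. g (y t) (u t) * exp (- lam * t))" by (simp add: F_def fun_eq_iff)
  have Jc: "J_cont g lam y u = integral {0..} F" by (simp add: J_cont_def Fe)
  define b where "b i = interp \<T> (\<lambda>z. g z (us i)) (yh i)" for i
  define \<delta> where "\<delta> = 1 - lam * h"
  have lh: "0 < lam * h" "lam * h \<le> 1 / 2" using lam h by (simp_all add: field_simps)
  have d0: "0 \<le> \<delta>" "\<delta> < 1" using lh by (simp_all add: \<delta>_def)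
  have bb: "\<bar>b i\<bar> \<le> M_g" for i using Igb[OF yhOm usU] by (simp add: b_def)
  have summ: "summable (\<lambda>i. \<delta> ^ i * b i)"
  proof (rule summable_comparison_test)
    have "norm (\<delta> ^ n * b n) \<le> M_g * \<delta> ^ n" for n
    proof -
      have "norm (\<delta> ^ n * b n) = \<delta> ^ n * \<bar>b n\<bar>" using d0 by (simp add: abs_mult)
      also have "\<dots> \<le> \<delta> ^ n * M_g" using bb[of n] d0 by (intro mult_left_mono) auto
      finally show ?thesis by (simp add: mult.commute)
    qed
    then show "\<exists>N. \<forall>n\<ge>N. norm (\<delta> ^ n * b n) \<le> M_g * \<delta> ^ n" by blast
    show "summable (\<lambda>n. M_g * \<delta> ^ n)" using d0 by (intro summable_mult summable_geometric) simp
  qed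
  have Jd: "J_disc \<T> f g lam h y0 (\<lambda>i. u (real i * h)) = h * (\<Sum>i. \<delta> ^ i * b i)"
    by (simp add: J_disc_def \<delta>_def b_def yh_def us_def)
  define d where "d i = integral {real i * h..real (Suc i) * h} F - h * (\<delta> ^ i * b i)" for i
  have de: "d = (\<lambda>i. integral {real i * h..real (Suc i) * h} F - h * (\<delta> ^ i * b i))"
    by (simp add: d_def fun_eq_iff)
  have dsum: "d sums (J_cont g lam y u - J_disc \<T> f g lam h y0 (\<lambda>i. u (real i * h)))"
    using sums_diff[OF isplit(2) sums_mult[OF summable_sums[OF summ], of h]] unfolding de Jc Jd by simp
  define w where "w i = h * (P * (h + k) * q ^ i + A * (h + k) * r ^ i + M_g * ((1 - q) * q ^ i + (q ^ i - \<delta> ^ i)))" for i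
  have dw: "\<bar>d i\<bar> \<le> w i" for i
  proof -
    define ti where "ti = real i * h"
    have ti0: "0 \<le> ti" using h by (simp add: ti_def)
    have tS: "real (Suc i) * h = ti + h" by (simp add: ti_def algebra_simps)
    define W where "W = P * (h + k) * q ^ i + A * (h + k) * r ^ i + M_g * ((1 - q) * q ^ i + (q ^ i - \<delta> ^ i))"
    have w: "w i = h * W" by (simp add: w_def W_def)
    have qi: "q ^ i = exp (- lam * ti)" by (simp add: q_def ti_def exp_of_nat_mult[symmetric] algebra_simps)
    have qi1: "q ^ Suc i = exp (- lam * (ti + h))"
    proof -
      have "q ^ Suc i = exp (real (Suc i) * (- (lam * h)))" by (simp only: q_def exp_of_nat_mult)
      also have "real (Suc i) * (- (lam * h)) = - lam * (ti + h)" by (simp add: ti_def algebra_simps)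
      finally show ?thesis .
    qed
    have dq: "\<delta> ^ i \<le> q ^ i"
    proof -
      have "\<delta> \<le> q" unfolding \<delta>_def q_def using exp_ge_add_one_self[of "- (lam * h)"] by simp
      then show ?thesis using d0 by (intro power_mono) auto
    qed
    have ytiO: "y ti \<in> Om" using yOm ti0 .
    have uti: "u ti = us i" by (simp add: ti_def us_def)
    have pw: "\<bar>F t - \<delta> ^ i * b i\<bar> \<le> W" if t: "ti \<le> t" "t \<le> ti + h" for t
    proof -
      have t0: "0 \<le> t" using t ti0 by simp
      have utU: "u t \<in> U" using uU' t0 by simp
      have ytO: "y t \<in> Om" using yOm t0 .
      define ex where "ex = exp (- lam * t)"
      have ex1: "ex \<le> q ^ i" unfolding qi ex_def using t lam by simp
      have ex2: "q ^ Suc i \<le> ex" unfolding qi1 ex_def using t lam by simp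
      have ex0: "0 \<le> ex" by (simp add: ex_def)
      have ab: "\<bar>g (y t) (u t) - b i\<bar> \<le> P * (h + k) + L_g * e i"
      proof -
        have "\<bar>g (y t) (u t) - b i\<bar> \<le> \<bar>g (y t) (u t) - g (y t) (us i)\<bar> + \<bar>g (y t) (us i) - g (y ti) (us i)\<bar>
               + \<bar>g (y ti) (us i) - g (yh i) (us i)\<bar> + \<bar>g (yh i) (us i) - b i\<bar>" by linarith
        also have "\<dots> \<le> L_g * (L_u * h) + L_g * (3 * Mf * h) + L_g * e i + L_g * k"
        proof (intro add_mono)
          have "norm (u t - us i) \<le> L_u * \<bar>t - ti\<bar>" using ulip'[of ti t] ti0 t0 uti by simp
          also have "\<dots> \<le> L_u * h" using t Lu by (intro mult_left_mono) auto
          finally show "\<bar>g (y t) (u t) - g (y t) (us i)\<bar> \<le> L_g * (L_u * h)"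
            using g_lip_u[OF utU usU[of i], of "y t"] Lg by (meson mult_left_mono order_trans)
          have "norm (y t - y ti) \<le> 3 * Mf * (t - ti)" using ylip[of ti t] ti0 t by simp
          also have "\<dots> \<le> 3 * Mf * h" using t Mf0 by (intro mult_left_mono) auto
          finally show "\<bar>g (y t) (us i) - g (y ti) (us i)\<bar> \<le> L_g * (3 * Mf * h)"
            using g_lip_y[OF usU[of i], of "y t" "y ti"] Lg by (meson mult_left_mono order_trans)
          show "\<bar>g (y ti) (us i) - g (yh i) (us i)\<bar> \<le> L_g * e i"
            using g_lip_y[OF usU[of i], of "y ti" "yh i"] by (simp add: e_def ti_def)
          have "\<bar>b i - g (yh i) (us i)\<bar> \<le> L_g * k" unfolding b_def by (rule Igerr[OF yhOm usU])
          then show "\<bar>g (yh i) (us i) - b i\<bar> \<le> L_g * k" by simp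
        qed
        also have "\<dots> \<le> P * (h + k) + L_g * e i"
        proof -
          have ex: "P * (h + k) = L_g * (L_u * h) + L_g * (3 * Mf * h) + L_g * k + (L_g * (3 * Mf + L_u) * k + L_g * h)"
            by (simp add: P_def algebra_simps)
          have "0 \<le> L_g * (3 * Mf + L_u) * k + L_g * h" using Lg Mf0 Lu k0 h by simp
          then show ?thesis using ex by linarith
        qed
        finally show ?thesis .
      qed
      have bd: "\<bar>ex - \<delta> ^ i\<bar> \<le> (1 - q) * q ^ i + (q ^ i - \<delta> ^ i)"
      proof -
        have "q ^ Suc i = q * q ^ i" by simp
        then have "(1 - q) * q ^ i = q ^ i - q ^ Suc i" by (simp add: algebra_simps)
        then show ?thesis using ex1 ex2 dq by (simp add: abs_le_iff)
      qed
      have "F t - \<delta> ^ i * b i = (g (y t) (u t) - b i) * ex + b i * (ex - \<delta> ^ i)"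
        by (simp add: F_def ex_def algebra_simps)
      then have "\<bar>F t - \<delta> ^ i * b i\<bar> \<le> \<bar>g (y t) (u t) - b i\<bar> * ex + \<bar>b i\<bar> * \<bar>ex - \<delta> ^ i\<bar>"
        using ex0 by (simp add: abs_mult) (metis abs_triangle_ineq abs_mult abs_of_nonneg)
      also have "\<dots> \<le> (P * (h + k) + L_g * e i) * q ^ i + M_g * ((1 - q) * q ^ i + (q ^ i - \<delta> ^ i))"
      proof (rule add_mono)
        show "\<bar>g (y t) (u t) - b i\<bar> * ex \<le> (P * (h + k) + L_g * e i) * q ^ i"
          using ab ex1 ex0 by (intro mult_mono) auto
        show "\<bar>b i\<bar> * \<bar>ex - \<delta> ^ i\<bar> \<le> M_g * ((1 - q) * q ^ i + (q ^ i - \<delta> ^ i))"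
          using bb[of i] bd Mg0 by (intro mult_mono) auto
      qed
      also have "\<dots> \<le> W"
      proof -
        have "(P * (h + k) + L_g * e i) * q ^ i = P * (h + k) * q ^ i + L_g * e i * q ^ i" by (simp add: algebra_simps)
        then show ?thesis using eE[of i] unfolding W_def by linarith
      qed
      finally show ?thesis .
    qed
    have intF: "F integrable_on {ti..ti + h}"
      by (rule integrable_continuous_interval[OF continuous_on_subset[OF Fcont]]) (use ti0 in auto)
    have d1: "d i = integral {ti..ti + h} F - h * (\<delta> ^ i * b i)"
      unfolding d_def tS ti_def[symmetric] ..
    have "d i = integral {ti..ti + h} F - integral {ti..ti + h} (\<lambda>t. \<delta> ^ i * b i)"
      unfolding d1 using h by simp
    also have "\<dots> = integral {ti..ti + h} (\<lambda>t. F t - \<delta> ^ i * b i)"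
      by (rule integral_diff[symmetric, OF intF integrable_const_ivl])
    finally have di: "d i = integral {ti..ti + h} (\<lambda>t. F t - \<delta> ^ i * b i)" .
    have "norm (integral {ti..ti + h} (\<lambda>t. F t - \<delta> ^ i * b i)) \<le> W * ((ti + h) - ti)"
    proof (rule integral_bound)
      show "ti \<le> ti + h" using h by simp
      show "continuous_on {ti..ti + h} (\<lambda>t. F t - \<delta> ^ i * b i)"
        by (intro continuous_intros continuous_on_subset[OF Fcont]) (use ti0 in auto)
      show "\<And>t. t \<in> {ti..ti + h} \<Longrightarrow> norm (F t - \<delta> ^ i * b i) \<le> W" using pw by auto
    qed
    then show ?thesis using di w by (simp add: mult.commute)
  qed
  obtain S where S: "w sums S" "S \<le> (h + k) * (P * (3 / (2 * lam)) + A * (2 / mu + 1 / (2 * lam)) + 2 * M_g)"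
    using sum_bound_B[OF lam h mu P0 A0 Mg0 k0] unfolding w_def q_def r_def \<delta>_def by blast
  have "\<bar>J_cont g lam y u - J_disc \<T> f g lam h y0 (\<lambda>i. u (real i * h))\<bar> \<le> S"
    by (rule sums_abs_bound[OF dsum S(1) dw])
  then show ?thesis using S(2) unfolding k_def A_def K0_def P_def mu_def by simp
qed

theorem lemma2:
  fixes f :: "real^'n \<Rightarrow> real^'m \<Rightarrow> real^'n"
    and g :: "real^'n \<Rightarrow> real^'m \<Rightarrow> real"
    and Om :: "(real^'n) set" and U :: "(real^'m) set"
    and lam L_f L_g M_f M_g L_u C_I :: real
  assumes lam_pos: "lam > 0"
    and U: "compact U" "convex U"
    and f_lip_y: "\<And>y y' u. u \<in> U \<Longrightarrow> norm (f y u - f y' u) \<le> L_f * norm (y - y')"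
    and f_lip_u: "\<And>y u u'. u \<in> U \<Longrightarrow> u' \<in> U \<Longrightarrow> norm (f y u - f y u') \<le> L_f * norm (u - u')"
    and g_lip_y: "\<And>y y' u. u \<in> U \<Longrightarrow> \<bar>g y u - g y' u\<bar> \<le> L_g * norm (y - y')"
    and g_lip_u: "\<And>y u u'. u \<in> U \<Longrightarrow> u' \<in> U \<Longrightarrow> \<bar>g y u - g y u'\<bar> \<le> L_g * norm (u - u')"
    and f_cont: "continuous_on UNIV (\<lambda>(y, u). f y u)"
    and g_cont: "continuous_on UNIV (\<lambda>(y, u). g y u)"
    and Om: "polyhedron Om" "bounded Om"
    and M_f: "\<And>y u i. y \<in> Om \<Longrightarrow> u \<in> U \<Longrightarrow> \<bar>f y u $ i\<bar> \<le> M_f"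
    and M_g: "\<And>y u. y \<in> Om \<Longrightarrow> u \<in> U \<Longrightarrow> \<bar>g y u\<bar> \<le> M_g"
    and invariant: "\<And>y u h. y \<in> Om \<Longrightarrow> u \<in> U \<Longrightarrow> 0 < h \<Longrightarrow> h \<le> 1 / (2 * lam) \<Longrightarrow> y + h *\<^sub>R f y u \<in> Om"
    and lam_big: "lam > C_I * real CARD('n) * L_f"
  shows "\<exists>C>0. \<forall>\<T> h u y y0.
     regular_triangulation \<T> Om \<longrightarrow>
     (\<forall>S\<in>\<T>. \<forall>z\<in>interior S. \<forall>v\<in>U. \<forall>j. \<forall>D.
         GDERIV (interp \<T> (\<lambda>x. f x v $ j)) z :> D \<longrightarrow> norm D \<le> C_I * sqrt (real CARD('n)) * L_f) \<longrightarrow>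
     0 < h \<longrightarrow> h \<le> 1 / (2 * lam) \<longrightarrow>
     (\<forall>t\<ge>0. u t \<in> U) \<longrightarrow>
     (\<lambda>t. (norm (u t))\<^sup>2) integrable_on {0..} \<longrightarrow>
     (\<forall>s\<ge>0. \<forall>t\<ge>0. norm (u t - u s) \<le> L_u * \<bar>t - s\<bar>) \<longrightarrow>
     y0 \<in> Om \<longrightarrow>
     y 0 = y0 \<longrightarrow>
     (\<forall>t\<ge>0. (y has_vector_derivative f (y t) (u t)) (at t within {0..})) \<longrightarrow>
     \<bar>J_cont g lam y u - J_disc \<T> f g lam h y0 (\<lambda>i. u (real i * h))\<bar> \<le> C * (h + mesh \<T>)"
proof -
  define n where "n = real CARD('n)"
  define Lb where "Lb = max (C_I * n * L_f) 0"
  define Mf where "Mf = sqrt n * M_f"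
  define expr where "expr = L_g * (3 * Mf + L_u + 1) * (3 / (2 * lam))
        + L_g * (L_f * (3 * Mf + L_u + 1)) / (lam - Lb) * (2 / (lam - Lb) + 1 / (2 * lam)) + 2 * M_g"
  have Lb: "0 \<le> Lb" "Lb < lam" using lam_pos lam_big by (auto simp: Lb_def n_def)
  have cO: "convex Om" using Om(1) by (rule polyhedron_imp_convex)
  have clO: "closed Om" using Om(1) by (rule polyhedron_imp_closed)
  show ?thesis
  proof (intro exI[of _ "max 1 expr"] conjI allI impI)
    show "0 < max 1 expr" by simp
    fix \<T> h u y y0
    assume T: "regular_triangulation \<T> Om"
      and H: "\<forall>S\<in>\<T>. \<forall>z\<in>interior S. \<forall>v\<in>U. \<forall>j. \<forall>D.
         GDERIV (interp \<T> (\<lambda>x. f x v $ j)) z :> D \<longrightarrow> norm D \<le> C_I * sqrt (real CARD('n)) * L_f"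
      and h0: "0 < h" and h1: "h \<le> 1 / (2 * lam)"
      and uU: "\<forall>t\<ge>0. u t \<in> U"
      and uint: "(\<lambda>t. (norm (u t))\<^sup>2) integrable_on {0..}"
      and ulip: "\<forall>s\<ge>0. \<forall>t\<ge>0. norm (u t - u s) \<le> L_u * \<bar>t - s\<bar>"
      and y0O: "y0 \<in> Om" and y0: "y 0 = y0"
      and der: "\<forall>t\<ge>0. (y has_vector_derivative f (y t) (u t)) (at t within {0..})"
    have u0: "u 0 \<in> U" using uU by simp
    obtain b :: "real^'n" where b: "b \<in> Basis" using nonempty_Basis by blast
    have nb: "norm b = 1" using b by simp
    have Lf: "0 \<le> L_f"
    proof -
      have "norm (f b (u 0) - f 0 (u 0)) \<le> L_f * norm (b - 0)" by (rule f_lip_y[OF u0])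
      then have "norm (f b (u 0) - f 0 (u 0)) \<le> L_f" using nb by simp
      then show ?thesis using norm_ge_zero[of "f b (u 0) - f 0 (u 0)"] by linarith
    qed
    have Lg: "0 \<le> L_g"
    proof -
      have "\<bar>g b (u 0) - g 0 (u 0)\<bar> \<le> L_g * norm (b - 0)" by (rule g_lip_y[OF u0])
      then have "\<bar>g b (u 0) - g 0 (u 0)\<bar> \<le> L_g" using nb by simp
      then show ?thesis using abs_ge_zero[of "g b (u 0) - g 0 (u 0)"] by linarith
    qed
    have Lu: "0 \<le> L_u"
    proof -
      have "norm (u 1 - u 0) \<le> L_u * \<bar>1 - 0\<bar>" using ulip by (meson order_refl zero_le_one)
      then have "norm (u 1 - u 0) \<le> L_u" by simp
      then show ?thesis using norm_ge_zero[of "u 1 - u 0"] by linarith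
    qed
    have Mfb: "norm (f a w) \<le> Mf" if "a \<in> Om" "w \<in> U" for a w
      unfolding Mf_def n_def by (rule norm_vec_bound) (rule M_f[OF that])
    have Ilip: "norm (interp \<T> (\<lambda>z. f z w) q - interp \<T> (\<lambda>z. f z w) p) \<le> Lb * norm (q - p)"
      if w: "w \<in> U" and p: "p \<in> Om" and q: "q \<in> Om" for w p q
    proof -
      have H': "\<forall>S\<in>\<T>. \<forall>z\<in>interior S. \<forall>j. \<forall>D. GDERIV (interp \<T> (\<lambda>x. (\<lambda>z. f z w) x $ j)) z :> D
          \<longrightarrow> norm D \<le> C_I * sqrt (real CARD('n)) * L_f" using H w by blast
      have "norm (interp \<T> (\<lambda>z. f z w) q - interp \<T> (\<lambda>z. f z w) p)
          \<le> (sqrt (real CARD('n)) * (C_I * sqrt (real CARD('n)) * L_f)) * norm (q - p)"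
        by (rule interp_lip[OF T cO H' p q])
      also have "sqrt (real CARD('n)) * (C_I * sqrt (real CARD('n)) * L_f) = C_I * n * L_f"
        by (simp add: n_def algebra_simps)
      also have "C_I * n * L_f * norm (q - p) \<le> Lb * norm (q - p)"
        by (intro mult_right_mono) (auto simp: Lb_def)
      finally show ?thesis .
    qed
    have main: "\<bar>J_cont g lam y u - J_disc \<T> f g lam h y0 (\<lambda>i. u (real i * h))\<bar> \<le> (h + mesh \<T>) * expr"
      unfolding expr_def
      by (rule main_bound[OF lam_pos h0 h1 T cO clO Lb Ilip Lf Lg Lu f_lip_y f_lip_u g_lip_y g_lip_u
            g_cont Mfb M_g invariant uU ulip y0O y0 der])
    obtain S0 where S0: "S0 \<in> \<T>" "y0 \<in> S0" using T y0O by (auto simp: regular_triangulation_def)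
    obtain v where v: "v \<in> verts S0"
    proof -
      have "card (verts S0) = CARD('n) + 1" using tri_facts(3)[OF T S0(1)] by simp
      then have "verts S0 \<noteq> {}" by auto
      then show ?thesis using that by blast
    qed
    have k0: "0 \<le> mesh \<T>" by (rule mesh_facts(2)[OF T S0 v])
    have "(h + mesh \<T>) * expr \<le> (h + mesh \<T>) * max 1 expr"
      using h0 k0 by (intro mult_left_mono) auto
    then show "\<bar>J_cont g lam y u - J_disc \<T> f g lam h y0 (\<lambda>i. u (real i * h))\<bar> \<le> max 1 expr * (h + mesh \<T>)"
      using main by (simp add: mult.commute)
  qed
qed

end
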